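(* In the setting described in the context, let $E$ be a bounded subset of $X$. If $(P_s)$ has the strong duality property (resp. the strict strong duality property) with Lagrange multiplier $\varphi_s\in D(A^* )$, then $\{(\bar P_{[0,T]}):T>0\}$ is dissipative (resp. strictly dissipative) at $(y_s,u_s)$ with respect to the supply rate $\omega(y,u)=f^0(y,u)-f^0(y_s,u_s)$, with storage function $S(y)=-\langle\varphi_s,y\rangle_{X^*,X}$ for $y\in E$. Consequently, under the strict strong duality property, $\{(\bar P_{[0,T]}):T>0\}$ has the measure-turnpike property at $(y_s,u_s)$.
   Context: Setting. - $X,U$ are reflexive Banach spaces, $E\subset X$ and $F\subset U$. - $A$ generates a $C_0$-semigroup $e^{tA}$ on $X$, with adjoint $A^*:D(A^* )\subset X^*\to X^*$. - $f:X\times U\to X$ is continuous and Lipschitz in $(y,u)$. - $f^0:X\times U\to\mathbb R$ is continuous and bounded below. Dynamic problem. For $T>0$, problem $(\bar P_{[0,T]})$ is to minimize $\frac1T\int_0^Tf^0(y,u)\,dt$ over admissible pairs, with free terminal states. - An admissible pair is $(y,u)\in C([0,T];X)\times L^2(0,T;U)$ with $y(\tau)=e^{\tau A}y(0)+\int_0^\tau e^{(\tau-t)A}f(y,u)\,dt$ for $\tau\in[0,T]$, $y(t)\in E$ and $u(t)\in F$. - It is assumed to have an optimal solution $(y^T,u^T)$ for each $T$. Static problem. Problem $(P_s)$ is to minimize $f^0(y,u)$ over $(y,u)\in E\times F$ with $\langle A^*\varphi,y\rangle+\langle\varphi,f(y,u)\rangle=0$ for all $\varphi\in D(A^* )$.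 It has an optimal solution $(y_s,u_s)$. $\mathcal K$-class functions. A $\mathcal K$-class function is continuous, monotone increasing, $\alpha:[0,\infty)\to[0,\infty)$, with $\alpha(0)=0$. Strong duality. $(P_s)$ has the strong duality property if there is $\varphi_s\in D(A^* )$ such that $(y_s,u_s)$ minimizes over $E\times F$ the Lagrangian $$L(y,u,\varphi_s)=f^0(y,u)+\langle A^*\varphi_s,y\rangle_{X^*,X}+\langle\varphi_s,f(y,u)\rangle_{X^*,X}.$$ It has the strict strong duality property if moreover there is a $\mathcal K$-class $\alpha$ with $$L(y,u,\varphi_s)\ge L(y_s,u_s,\varphi_s)+\alpha(\|(y-y_s,u-u_s)\|_{X\times U})\quad\text{for all }(y,u)\in E\times F.$$ Dissipativity. $\{(\bar P_{[0,T]})\}$ is dissipative at $(y_s,u_s)$ with storage function $S:E\to\mathbb R$ (locally bounded, bounded below) if for all $T>0$, all admissible pairs and all $\tau\in[0,T]$, $$S(y(0))+\int_0^\tau\omega(y,u)\,dt\ge S(y(\tau)).$$ It is strictly dissipative if, for some $\mathcal K$-class $\alpha$, the right-hand side additionally contains $+\int_0^\tau\alpha(\|(y(t)-y_s,u(t)-u_s)\|_{X\times U})\,dt$. Measure-turnpike property at $(y_s,u_s)$. For every $\varepsilon>0$ there is $\Lambda(\varepsilon)>0$ with $|\{t\in[0,T]:\|(y^T(t)-y_s,u^T(t)-u_s)\|_{X\times U}>\varepsilon\}|\le\Lambda(\varepsilon)$ for all $T>0$ and any optimal solution $(y^T,u^T)$. *)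

theory Defs
  imports "HOL-Analysis.Analysis"
begin

definition reflexive_space :: "'a::real_normed_vector itself \<Rightarrow> bool" where
  "reflexive_space _ \<longleftrightarrow>
     (\<forall>\<Phi> :: ('a \<Rightarrow>\<^sub>L real) \<Rightarrow>\<^sub>L real. \<exists>x::'a. \<forall>\<phi>. blinfun_apply \<Phi> \<phi> = blinfun_apply \<phi> x)"

definition C0_semigroup :: "(real \<Rightarrow> 'a::real_normed_vector \<Rightarrow>\<^sub>L 'a) \<Rightarrow> bool" where
  "C0_semigroup S \<longleftrightarrow>
     S 0 = id_blinfun \<and>
     (\<forall>s\<ge>0. \<forall>t\<ge>0. S (s + t) = S s o\<^sub>L S t) \<and>
     (\<forall>x. ((\<lambda>t. blinfun_apply (S t) x) \<longlongrightarrow> x) (at_right 0))"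

text \<open>Graph of the infinitesimal generator A of the semigroup S:
  y is in D(A) and A y = z.\<close>
definition gen_graph :: "(real \<Rightarrow> 'a::real_normed_vector \<Rightarrow>\<^sub>L 'a) \<Rightarrow> 'a \<Rightarrow> 'a \<Rightarrow> bool" where
  "gen_graph S y z \<longleftrightarrow> ((\<lambda>t. (blinfun_apply (S t) y - y) /\<^sub>R t) \<longlongrightarrow> z) (at_right 0)"

text \<open>Graph of the adjoint A*: phi is in D(A*) and A* phi = psi.\<close>
definition adj_gen_graph ::
  "(real \<Rightarrow> 'a::real_normed_vector \<Rightarrow>\<^sub>L 'a) \<Rightarrow> ('a \<Rightarrow>\<^sub>L real) \<Rightarrow> ('a \<Rightarrow>\<^sub>L real) \<Rightarrow> bool" where
  "adj_gen_graph S \<phi> \<psi> \<longleftrightarrow> (\<forall>y z. gen_graph S y z \<longrightarrow> blinfun_apply \<phi> z = blinfun_apply \<psi> y)"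

definition strongly_measurable_on :: "real set \<Rightarrow> (real \<Rightarrow> 'a::topological_space) \<Rightarrow> bool" where
  "strongly_measurable_on I u \<longleftrightarrow>
     (\<exists>s :: nat \<Rightarrow> real \<Rightarrow> 'a. (\<forall>n. simple_function (lebesgue_on I) (s n)) \<and>
        (AE t in lebesgue_on I. (\<lambda>n. s n t) \<longlonglongrightarrow> u t))"

definition L2_on :: "real set \<Rightarrow> (real \<Rightarrow> 'a::real_normed_vector) \<Rightarrow> bool" where
  "L2_on I u \<longleftrightarrow> strongly_measurable_on I u \<and> integrable (lebesgue_on I) (\<lambda>t. (norm (u t))\<^sup>2)"

text \<open>Extended-valued Lebesgue integral (positive part minus negative part);
  used for integrands that are bounded below, where it may be +infinity.\<close>
definition ext_int :: "real set \<Rightarrow> (real \<Rightarrow> real) \<Rightarrow> ereal" where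
  "ext_int I g = enn2ereal (\<integral>\<^sup>+ t\<in>I. ennreal (g t) \<partial>lebesgue)
               - enn2ereal (\<integral>\<^sup>+ t\<in>I. ennreal (- g t) \<partial>lebesgue)"

definition K_class :: "(real \<Rightarrow> real) \<Rightarrow> bool" where
  "K_class \<alpha> \<longleftrightarrow> continuous_on {0..} \<alpha> \<and> strict_mono_on {0..} \<alpha> \<and> \<alpha> 0 = 0 \<and>
                  (\<forall>r\<ge>0. \<alpha> r \<ge> 0)"

definition admissible ::
  "(real \<Rightarrow> 'x::banach \<Rightarrow>\<^sub>L 'x) \<Rightarrow> ('x \<Rightarrow> 'u::banach \<Rightarrow> 'x) \<Rightarrow> 'x set \<Rightarrow> 'u set \<Rightarrow> real
     \<Rightarrow> (real \<Rightarrow> 'x) \<Rightarrow> (real \<Rightarrow> 'u) \<Rightarrow> bool" where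
  "admissible S f E F T y u \<longleftrightarrow>
     continuous_on {0..T} y \<and> L2_on {0..T} u \<and>
     (\<forall>\<tau>\<in>{0..T}. ((\<lambda>t. blinfun_apply (S (\<tau> - t)) (f (y t) (u t)))
                      has_integral (y \<tau> - blinfun_apply (S \<tau>) (y 0))) {0..\<tau>}) \<and>
     (\<forall>t\<in>{0..T}. y t \<in> E \<and> u t \<in> F)"

definition cost :: "('x \<Rightarrow> 'u \<Rightarrow> real) \<Rightarrow> real \<Rightarrow> (real \<Rightarrow> 'x) \<Rightarrow> (real \<Rightarrow> 'u) \<Rightarrow> ereal" where
  "cost f0 T y u = ext_int {0..T} (\<lambda>t. f0 (y t) (u t)) / ereal T"

definition optimal_dyn ::
  "(real \<Rightarrow> 'x::banach \<Rightarrow>\<^sub>L 'x) \<Rightarrow> ('x \<Rightarrow> 'u::banach \<Rightarrow> 'x) \<Rightarrow> ('x \<Rightarrow> 'u \<Rightarrow> real)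
     \<Rightarrow> 'x set \<Rightarrow> 'u set \<Rightarrow> real \<Rightarrow> (real \<Rightarrow> 'x) \<Rightarrow> (real \<Rightarrow> 'u) \<Rightarrow> bool" where
  "optimal_dyn S f f0 E F T y u \<longleftrightarrow>
     admissible S f E F T y u \<and>
     (\<forall>y' u'. admissible S f E F T y' u' \<longrightarrow> cost f0 T y u \<le> cost f0 T y' u')"

definition static_feasible ::
  "(real \<Rightarrow> 'x::banach \<Rightarrow>\<^sub>L 'x) \<Rightarrow> ('x \<Rightarrow> 'u::banach \<Rightarrow> 'x) \<Rightarrow> 'x set \<Rightarrow> 'u set \<Rightarrow> 'x \<Rightarrow> 'u \<Rightarrow> bool" where
  "static_feasible S f E F y u \<longleftrightarrow> y \<in> E \<and> u \<in> F \<and>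
     (\<forall>\<phi> \<psi>. adj_gen_graph S \<phi> \<psi> \<longrightarrow> blinfun_apply \<psi> y + blinfun_apply \<phi> (f y u) = 0)"

definition static_optimal ::
  "(real \<Rightarrow> 'x::banach \<Rightarrow>\<^sub>L 'x) \<Rightarrow> ('x \<Rightarrow> 'u::banach \<Rightarrow> 'x) \<Rightarrow> ('x \<Rightarrow> 'u \<Rightarrow> real)
     \<Rightarrow> 'x set \<Rightarrow> 'u set \<Rightarrow> 'x \<Rightarrow> 'u \<Rightarrow> bool" where
  "static_optimal S f f0 E F ys us \<longleftrightarrow> static_feasible S f E F ys us \<and>
     (\<forall>y u. static_feasible S f E F y u \<longrightarrow> f0 ys us \<le> f0 y u)"

text \<open>Lagrangian L(y,u,phi) = f0(y,u) + <A* phi, y> + <phi, f(y,u)>, with psi = A* phi.\<close>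
definition lagrangian ::
  "('x::banach \<Rightarrow> 'u::banach \<Rightarrow> 'x) \<Rightarrow> ('x \<Rightarrow> 'u \<Rightarrow> real) \<Rightarrow> ('x \<Rightarrow>\<^sub>L real) \<Rightarrow> ('x \<Rightarrow>\<^sub>L real)
     \<Rightarrow> 'x \<Rightarrow> 'u \<Rightarrow> real" where
  "lagrangian f f0 \<phi> \<psi> y u = f0 y u + blinfun_apply \<psi> y + blinfun_apply \<phi> (f y u)"

definition strong_duality_with ::
  "(real \<Rightarrow> 'x::banach \<Rightarrow>\<^sub>L 'x) \<Rightarrow> ('x \<Rightarrow> 'u::banach \<Rightarrow> 'x) \<Rightarrow> ('x \<Rightarrow> 'u \<Rightarrow> real)
     \<Rightarrow> 'x set \<Rightarrow> 'u set \<Rightarrow> 'x \<Rightarrow> 'u \<Rightarrow> ('x \<Rightarrow>\<^sub>L real) \<Rightarrow> bool" where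
  "strong_duality_with S f f0 E F ys us \<phi>s \<longleftrightarrow>
     (\<exists>\<psi>s. adj_gen_graph S \<phi>s \<psi>s \<and>
        (\<forall>y\<in>E. \<forall>u\<in>F. lagrangian f f0 \<phi>s \<psi>s ys us \<le> lagrangian f f0 \<phi>s \<psi>s y u))"

definition strict_strong_duality_with ::
  "(real \<Rightarrow> 'x::banach \<Rightarrow>\<^sub>L 'x) \<Rightarrow> ('x \<Rightarrow> 'u::banach \<Rightarrow> 'x) \<Rightarrow> ('x \<Rightarrow> 'u \<Rightarrow> real)
     \<Rightarrow> 'x set \<Rightarrow> 'u set \<Rightarrow> 'x \<Rightarrow> 'u \<Rightarrow> ('x \<Rightarrow>\<^sub>L real) \<Rightarrow> bool" where
  "strict_strong_duality_with S f f0 E F ys us \<phi>s \<longleftrightarrow>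
     (\<exists>\<psi>s \<alpha>. adj_gen_graph S \<phi>s \<psi>s \<and> K_class \<alpha> \<and>
        (\<forall>y\<in>E. \<forall>u\<in>F. lagrangian f f0 \<phi>s \<psi>s y u \<ge>
            lagrangian f f0 \<phi>s \<psi>s ys us + \<alpha> (norm (y - ys, u - us))))"

definition storage_function :: "'x::real_normed_vector set \<Rightarrow> ('x \<Rightarrow> real) \<Rightarrow> bool" where
  "storage_function E St \<longleftrightarrow> bdd_below (St ` E) \<and>
     (\<forall>x\<in>E. \<exists>r>0. bounded (St ` (E \<inter> ball x r)))"

definition dissipative ::
  "(real \<Rightarrow> 'x::banach \<Rightarrow>\<^sub>L 'x) \<Rightarrow> ('x \<Rightarrow> 'u::banach \<Rightarrow> 'x) \<Rightarrow> 'x set \<Rightarrow> 'u set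
     \<Rightarrow> ('x \<Rightarrow> 'u \<Rightarrow> real) \<Rightarrow> ('x \<Rightarrow> real) \<Rightarrow> bool" where
  "dissipative S f E F \<omega> St \<longleftrightarrow> storage_function E St \<and>
     (\<forall>T>0. \<forall>y u. admissible S f E F T y u \<longrightarrow> (\<forall>\<tau>\<in>{0..T}.
        ereal (St (y 0)) + ext_int {0..\<tau>} (\<lambda>t. \<omega> (y t) (u t)) \<ge> ereal (St (y \<tau>))))"

definition strictly_dissipative ::
  "(real \<Rightarrow> 'x::banach \<Rightarrow>\<^sub>L 'x) \<Rightarrow> ('x \<Rightarrow> 'u::banach \<Rightarrow> 'x) \<Rightarrow> 'x set \<Rightarrow> 'u set
     \<Rightarrow> 'x \<Rightarrow> 'u \<Rightarrow> ('x \<Rightarrow> 'u \<Rightarrow> real) \<Rightarrow> ('x \<Rightarrow> real) \<Rightarrow> bool" where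
  "strictly_dissipative S f E F ys us \<omega> St \<longleftrightarrow> storage_function E St \<and>
     (\<exists>\<alpha>. K_class \<alpha> \<and>
       (\<forall>T>0. \<forall>y u. admissible S f E F T y u \<longrightarrow> (\<forall>\<tau>\<in>{0..T}.
          ereal (St (y 0)) + ext_int {0..\<tau>} (\<lambda>t. \<omega> (y t) (u t))
            \<ge> ereal (St (y \<tau>)) + ext_int {0..\<tau>} (\<lambda>t. \<alpha> (norm (y t - ys, u t - us))))))"

definition measure_turnpike ::
  "(real \<Rightarrow> 'x::banach \<Rightarrow>\<^sub>L 'x) \<Rightarrow> ('x \<Rightarrow> 'u::banach \<Rightarrow> 'x) \<Rightarrow> ('x \<Rightarrow> 'u \<Rightarrow> real)
     \<Rightarrow> 'x set \<Rightarrow> 'u set \<Rightarrow> 'x \<Rightarrow> 'u \<Rightarrow> bool" where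
  "measure_turnpike S f f0 E F ys us \<longleftrightarrow>
     (\<forall>\<epsilon>>0. \<exists>\<Lambda>>0. \<forall>T>0. \<forall>y u. optimal_dyn S f f0 E F T y u \<longrightarrow>
        emeasure lebesgue {t\<in>{0..T}. norm (y t - ys, u t - us) > \<epsilon>} \<le> ennreal \<Lambda>)"

end

theory Submission
  imports Defs
begin

lemma hb_ext_step:
  fixes M :: "('a::real_normed_vector \<times> real) set"
  assumes sM: "subspace M" and dom: "\<forall>p\<in>M. snd p \<le> norm (fst p)"
    and x0: "x0 \<notin> fst ` M"
  shows "\<exists>M'. subspace M' \<and> M \<subseteq> M' \<and> M' \<noteq> M \<and> (\<forall>p\<in>M'. snd p \<le> norm (fst p))"
proof -
  have add: "(v + w, a + b) \<in> M" if "(v,a) \<in> M" "(w,b) \<in> M" for v w a b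
    using sM that unfolding subspace_def by (metis add_Pair)
  have scl: "(r *\<^sub>R v, r * a) \<in> M" if "(v,a) \<in> M" for v a r
    using sM that unfolding subspace_def by (metis scaleR_Pair real_scaleR_def)
  have zero: "(0,0) \<in> M" using sM unfolding subspace_def by (simp add: zero_prod_def)
  define L where "L = {a - norm (w - x0) | w a. (w,a) \<in> M}"
  have Lb: "l \<le> norm (w' + x0) - a'" if lL: "l \<in> L" and wM: "(w',a') \<in> M" for l w' a'
  proof -
    obtain w a where wa: "l = a - norm (w - x0)" "(w,a) \<in> M" using lL unfolding L_def by blast
    have "a + a' \<le> norm (w + w')" using dom add[OF wa(2) wM] by auto
    also have "\<dots> \<le> norm (w - x0) + norm (w' + x0)"
      using norm_triangle_ineq[of "w - x0" "w' + x0"] by simp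
    finally show ?thesis using wa by simp
  qed
  have Lne: "L \<noteq> {}" using zero L_def by auto
  have bddL: "bdd_above L" using Lb[OF _ zero] by (auto intro!: bdd_aboveI)
  define c where "c = Sup L"
  have c1: "a - norm (w - x0) \<le> c" if "(w,a) \<in> M" for w a
    unfolding c_def using that L_def bddL by (auto intro!: cSup_upper)
  have c2: "c \<le> norm (w + x0) - a" if "(w,a) \<in> M" for w a
    unfolding c_def using Lne Lb[OF _ that] by (auto intro!: cSup_least)
  define M' where "M' = {(v + t *\<^sub>R x0, b + t * c) | v b t. (v,b) \<in> M}"
  have "subspace M'"
    unfolding subspace_def M'_def
  proof (intro conjI ballI allI)
    show "0 \<in> {(v + t *\<^sub>R x0, b + t * c) |v b t. (v, b) \<in> M}"
      using zero by (auto simp: zero_prod_def intro!: exI[of _ 0])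
  next
    fix x y assume "x \<in> {(v + t *\<^sub>R x0, b + t * c) |v b t. (v, b) \<in> M}"
      "y \<in> {(v + t *\<^sub>R x0, b + t * c) |v b t. (v, b) \<in> M}"
    then obtain v b t v' b' t' where "x = (v + t *\<^sub>R x0, b + t * c)" "(v,b)\<in>M"
      "y = (v' + t' *\<^sub>R x0, b' + t' * c)" "(v',b')\<in>M" by auto
    then show "x + y \<in> {(v + t *\<^sub>R x0, b + t * c) |v b t. (v, b) \<in> M}"
    proof -
      have "x + y = ((v+v') + (t+t') *\<^sub>R x0, (b+b') + (t+t') * c)"
        using \<open>x = _\<close> \<open>y = _\<close> by (simp add: algebra_simps scaleR_add_left)
      moreover have "(v+v', b+b') \<in> M" using add \<open>(v,b)\<in>M\<close> \<open>(v',b')\<in>M\<close> by blast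
      ultimately show ?thesis by blast
    qed
  next
    fix r x assume "x \<in> {(v + t *\<^sub>R x0, b + t * c) |v b t. (v, b) \<in> M}"
    then obtain v b t where "x = (v + t *\<^sub>R x0, b + t * c)" "(v,b)\<in>M" by auto
    then show "r *\<^sub>R x \<in> {(v + t *\<^sub>R x0, b + t * c) |v b t. (v, b) \<in> M}"
    proof -
      have "r *\<^sub>R x = (r *\<^sub>R v + (r*t) *\<^sub>R x0, r*b + (r*t) * c)"
        using \<open>x = _\<close> by (simp add: algebra_simps scaleR_add_right)
      moreover have "(r *\<^sub>R v, r*b) \<in> M" using scl \<open>(v,b)\<in>M\<close> by blast
      ultimately show ?thesis by blast
    qed
  qed
  moreover have "M \<subseteq> M'"
  proof
    fix p assume pM: "p \<in> M"
    obtain v b where "p = (v,b)" by (cases p)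
    then have "p = (v + 0 *\<^sub>R x0, b + 0 * c)" "(v,b) \<in> M" using pM by auto
    then show "p \<in> M'" unfolding M'_def by blast
  qed
  moreover have "(x0, c) \<in> M'"
  proof -
    have "(x0, c) = (0 + 1 *\<^sub>R x0, 0 + 1 * c)" by simp
    then show ?thesis unfolding M'_def using zero by blast
  qed
  then have "M' \<noteq> M" using x0 by force
  moreover have "\<forall>p\<in>M'. snd p \<le> norm (fst p)"
  proof
    fix p assume "p \<in> M'"
    then obtain v b t where p: "p = (v + t *\<^sub>R x0, b + t * c)" "(v,b)\<in>M"
      unfolding M'_def by auto
    consider "t = 0" | "t > 0" | "t < 0" by linarith
    then show "snd p \<le> norm (fst p)"
    proof cases
      case 1 then show ?thesis using p dom by auto
    next
      case 2
      have "((1/t) *\<^sub>R v, (1/t) * b) \<in> M" using scl[OF p(2)] by blast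
      from c2[OF this] have "t * c \<le> t * (norm ((1/t) *\<^sub>R v + x0) - (1/t) * b)"
        using 2 by (simp add: mult_left_mono)
      also have "\<dots> = norm (t *\<^sub>R ((1/t) *\<^sub>R v + x0)) - b"
        using 2 by (simp only: norm_scaleR right_diff_distrib abs_of_pos) simp
      also have "t *\<^sub>R ((1/t) *\<^sub>R v + x0) = v + t *\<^sub>R x0"
        using 2 by (simp add: scaleR_add_right)
      finally show ?thesis using p by simp
    next
      case 3
      define s where "s = - t"
      have s: "s > 0" using 3 s_def by simp
      have "((1/s) *\<^sub>R v, (1/s) * b) \<in> M" using scl[OF p(2)] by blast
      from c1[OF this] have "s * ((1/s) * b - norm ((1/s) *\<^sub>R v - x0)) \<le> s * c"
        using s by (simp add: mult_left_mono)
      moreover have "s * ((1/s) * b - norm ((1/s) *\<^sub>R v - x0)) = b - norm (s *\<^sub>R ((1/s) *\<^sub>R v - x0))"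
        using s by (simp only: norm_scaleR right_diff_distrib abs_of_pos) simp
      ultimately have "b - norm (s *\<^sub>R ((1/s) *\<^sub>R v - x0)) \<le> s * c" by simp
      also have "s *\<^sub>R ((1/s) *\<^sub>R v - x0) = v + t *\<^sub>R x0"
        using s by (simp add: s_def scaleR_diff_right)
      finally show ?thesis using p s_def by simp
    qed
  qed
  ultimately show ?thesis by blast
qed

lemma hahn_banach_norm:
  fixes z :: "'a::real_normed_vector"
  shows "\<exists>ch::('a \<Rightarrow>\<^sub>L real). blinfun_apply ch z = norm z"
proof -
  define A where "A = {G::('a \<times> real) set. subspace G \<and> (\<forall>p\<in>G. snd p \<le> norm (fst p)) \<and> (z, norm z) \<in> G}"
  have "\<forall>C\<in>chains A. \<exists>U\<in>A. \<forall>X\<in>C. X \<subseteq> U"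
  proof
    fix C assume C: "C \<in> chains A"
    show "\<exists>U\<in>A. \<forall>X\<in>C. X \<subseteq> U"
    proof (cases "C = {}")
      case True
      define G0 where "G0 = {(t *\<^sub>R z, t * norm z) | t. True}"
      have "subspace G0" unfolding subspace_def G0_def
        by (auto simp: zero_prod_def algebra_simps scaleR_add_left
            intro: exI[of _ 0] exI[of _ "_ + _"] exI[of _ "_ * _"])
      moreover have "\<forall>p\<in>G0. snd p \<le> norm (fst p)" unfolding G0_def by (auto intro!: mult_right_mono)
      moreover have "(z, norm z) \<in> G0" unfolding G0_def by (auto intro!: exI[of _ 1])
      ultimately show ?thesis using True A_def by auto
    next
      case False
      have CA: "C \<subseteq> A" and ch: "\<forall>X\<in>C. \<forall>Y\<in>C. X \<subseteq> Y \<or> Y \<subseteq> X"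
        using C unfolding chains_def chain_subset_def by auto
      have "subspace (\<Union>C)" unfolding subspace_def
      proof (intro conjI ballI allI)
        show "0 \<in> \<Union>C" using False CA A_def subspace_def by fastforce
      next
        fix x y assume "x \<in> \<Union>C" "y \<in> \<Union>C"
        then obtain X Y where "X \<in> C" "Y\<in>C" "x \<in> X" "y \<in> Y" by auto
        then show "x + y \<in> \<Union>C" using ch CA A_def unfolding subspace_def
          by (metis (no_types, lifting) Union_iff mem_Collect_eq subset_iff)
      next
        fix r x assume "x \<in> \<Union>C"
        then show "r *\<^sub>R x \<in> \<Union>C" using CA A_def unfolding subspace_def by blast
      qed
      then have "\<Union>C \<in> A" using CA False A_def by auto
      then show ?thesis by auto
    qed
  qed
  from Zorn_Lemma2[OF this] obtain M where MA: "M \<in> A" and Mmax: "\<forall>X\<in>A. M \<subseteq> X \<longrightarrow> X = M"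
    by blast
  have sM: "subspace M" and dom: "\<forall>p\<in>M. snd p \<le> norm (fst p)" and zM: "(z, norm z) \<in> M"
    using MA A_def by auto
  have add: "(v + w, a + b) \<in> M" if "(v,a) \<in> M" "(w,b) \<in> M" for v w a b
    using sM that unfolding subspace_def by (metis add_Pair)
  have scl: "(r *\<^sub>R v, r * a) \<in> M" if "(v,a) \<in> M" for v a r
    using sM that unfolding subspace_def by (metis scaleR_Pair real_scaleR_def)
  have tot: "\<exists>a. (x,a) \<in> M" for x
  proof (rule ccontr)
    assume "\<not> ?thesis"
    then have "x \<notin> fst ` M" by force
    from hb_ext_step[OF sM dom this] obtain M' where
      "subspace M'" "M \<subseteq> M'" "M' \<noteq> M" "\<forall>p\<in>M'. snd p \<le> norm (fst p)" by blast
    then have "M' \<in> A" using zM A_def by auto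
    then show False using Mmax \<open>M \<subseteq> M'\<close> \<open>M' \<noteq> M\<close> by blast
  qed
  have uniq: "a = b" if "(x,a) \<in> M" "(x,b) \<in> M" for x a b
  proof -
    have "(x + (-1) *\<^sub>R x, a + (-1) * b) \<in> M" using add[OF that(1) scl[OF that(2)]] .
    then have "a - b \<le> 0" using dom by force
    moreover have "(x + (-1) *\<^sub>R x, b + (-1) * a) \<in> M" using add[OF that(2) scl[OF that(1)]] .
    then have "b - a \<le> 0" using dom by force
    ultimately show ?thesis by simp
  qed
  define f where "f x = (THE a. (x,a) \<in> M)" for x
  have fM: "(x, f x) \<in> M" for x
    unfolding f_def using tot uniq by (metis theI)
  have fadd: "f (x + y) = f x + f y" for x y
    using uniq[OF fM add[OF fM fM]] .
  have fscl: "f (r *\<^sub>R x) = r *\<^sub>R f x" for r x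
    using uniq[OF fM scl[OF fM]] by simp
  have fb: "norm (f x) \<le> norm x * 1" for x
  proof -
    have "f x \<le> norm x" using dom fM by force
    moreover have "f ((-1) *\<^sub>R x) \<le> norm ((-1) *\<^sub>R x)" using dom fM[of "(-1) *\<^sub>R x"] by fastforce
    then have "- f x \<le> norm x" using fscl[of "-1" x] by simp
    ultimately show ?thesis by simp
  qed
  have bl: "bounded_linear f" by (rule bounded_linear_intro[OF fadd fscl fb])
  have "f z = norm z" using uniq[OF fM zM] .
  then show ?thesis using bl by (intro exI[of _ "Blinfun f"]) (simp add: bounded_linear_Blinfun_apply)
qed

lemma banach_steinhaus:
  fixes T :: "'i \<Rightarrow> ('a::banach \<Rightarrow>\<^sub>L 'b::real_normed_vector)"
  assumes pb: "\<And>x. \<exists>B. \<forall>i. norm (blinfun_apply (T i) x) \<le> B"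
  shows "\<exists>B. \<forall>i. norm (T i) \<le> B"
proof -
  define F where "F n = {x. \<forall>i. norm (blinfun_apply (T i) x) \<le> real n}" for n :: nat
  have clF: "closed (F n)" for n
  proof -
    have "F n = (\<Inter>i. {x. norm (blinfun_apply (T i) x) \<le> real n})" unfolding F_def by auto
    moreover have "closed {x. norm (blinfun_apply (T i) x) \<le> real n}" for i
      by (intro closed_Collect_le continuous_intros)
    ultimately show ?thesis by auto
  qed
  have cover: "\<Union>(range F) = UNIV"
  proof -
    have "x \<in> \<Union>(range F)" for x
    proof -
      obtain B where B: "\<forall>i. norm (blinfun_apply (T i) x) \<le> B" using pb by blast
      obtain n :: nat where "B \<le> real n" using real_arch_simple by blast
      then have "x \<in> F n" using B unfolding F_def by (auto intro: order_trans)
      then show ?thesis by auto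
    qed
    then show ?thesis by auto
  qed
  have "\<exists>n. interior (F n) \<noteq> {}"
  proof (rule ccontr)
    assume "\<not> ?thesis"
    then have "euclidean interior_of \<Union>(range F) = {}"
      by (intro Baire_category_alt)
        (use completely_metrizable_space_euclidean clF in \<open>auto simp: euclidean_interior_of\<close>)
    then show False using cover by (simp add: euclidean_interior_of)
  qed
  then obtain n x0 where "x0 \<in> interior (F n)" by blast
  then obtain r where r: "r > 0" "ball x0 r \<subseteq> F n"
    using open_contains_ball open_interior interior_subset by (metis subset_trans)
  have x0F: "x0 \<in> F n" using r by auto
  have bnd: "norm (blinfun_apply (T i) x) \<le> (4 * real n / r) * norm x" for i x
  proof (cases "x = 0")
    case True then show ?thesis by simp
  next
    case False
    define w where "w = (r / (2 * norm x)) *\<^sub>R x"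
    have nw: "norm w = r / 2" using False r unfolding w_def by simp
    have "x0 + w \<in> ball x0 r" using nw r by (simp add: dist_norm)
    then have "norm (blinfun_apply (T i) (x0 + w)) \<le> real n" using r unfolding F_def by auto
    moreover have "norm (blinfun_apply (T i) x0) \<le> real n" using x0F unfolding F_def by auto
    ultimately have "norm (blinfun_apply (T i) w) \<le> 2 * real n"
      using norm_triangle_ineq4[of "blinfun_apply (T i) (x0 + w)" "blinfun_apply (T i) x0"]
      by (simp add: blinfun.add_right)
    moreover have "blinfun_apply (T i) w = (r / (2 * norm x)) *\<^sub>R blinfun_apply (T i) x"
      unfolding w_def by (simp add: blinfun.scaleR_right)
    ultimately have "(r / (2 * norm x)) * norm (blinfun_apply (T i) x) \<le> 2 * real n"
      using r False by simp
    then have "norm (blinfun_apply (T i) x) \<le> (2 * real n) * (2 * norm x / r)"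
      using r False by (simp add: field_simps)
    then show ?thesis by (simp add: field_simps)
  qed
  have "norm (T i) \<le> 4 * real n / r" for i
    using r bnd by (intro norm_blinfun_bound) auto
  then show ?thesis by blast
qed

locale sgrp =
  fixes S :: "real \<Rightarrow> 'x::banach \<Rightarrow>\<^sub>L 'x"
  assumes sg: "C0_semigroup S"
begin

lemma S0: "blinfun_apply (S 0) x = x"
  using sg unfolding C0_semigroup_def by simp

lemma Sadd: "s \<ge> 0 \<Longrightarrow> t \<ge> 0 \<Longrightarrow> blinfun_apply (S (s + t)) x = blinfun_apply (S s) (blinfun_apply (S t) x)"
  using sg unfolding C0_semigroup_def by simp

lemma Sright: "((\<lambda>t. blinfun_apply (S t) x) \<longlongrightarrow> x) (at_right 0)"
  using sg unfolding C0_semigroup_def by simp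

lemma Sright_eps:
  assumes "e > 0" shows "\<exists>d>0. \<forall>h. 0 \<le> h \<and> h < d \<longrightarrow> norm (blinfun_apply (S h) x - x) < e"
proof -
  from Sright[of x] assms have "\<forall>\<^sub>F t in at_right 0. dist (blinfun_apply (S t) x) x < e"
    by (auto simp: tendsto_iff)
  then obtain b where b: "b > 0" "\<forall>y>0. y < b \<longrightarrow> dist (blinfun_apply (S y) x) x < e"
    by (auto simp: eventually_at_right_field)
  show ?thesis
  proof (intro exI[of _ b] conjI allI impI)
    fix h assume h: "0 \<le> h \<and> h < b"
    show "norm (blinfun_apply (S h) x - x) < e"
    proof (cases "h = 0")
      case True then show ?thesis using assms by (simp add: S0)
    next
      case False then show ?thesis using h b by (auto simp: dist_norm)
    qed
  qed (use b in auto)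
qed

lemma local_bound: "\<exists>d>0. \<exists>M. \<forall>t. 0 \<le> t \<and> t \<le> d \<longrightarrow> norm (S t) \<le> M"
proof (rule ccontr)
  assume "\<not> ?thesis"
  then have nb: "\<forall>d>0. \<forall>M. \<exists>t. 0 \<le> t \<and> t \<le> d \<and> norm (S t) > M" by (auto simp: not_le)
  have "\<exists>t. 0 \<le> t \<and> t \<le> 1 / (real n + 1) \<and> norm (S t) > real n + 1" for n :: nat
    using nb by auto
  then obtain t where t: "\<And>n. 0 \<le> t n \<and> t n \<le> 1 / (real n + 1) \<and> norm (S (t n)) > real n + 1"
    by metis
  have tpos: "t n > 0" for n
  proof -
    have "norm (S 0) \<le> 1"
      by (rule norm_blinfun_bound) (auto simp: S0)
    then show ?thesis using t[of n] by (cases "t n = 0") auto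
  qed
  have t0: "t \<longlonglongrightarrow> 0"
  proof (rule tendsto_sandwich[of "\<lambda>_. 0" _ _ "\<lambda>n. 1 / (real n + 1)"])
    show "\<forall>\<^sub>F n in sequentially. 0 \<le> t n" using t by auto
    show "\<forall>\<^sub>F n in sequentially. t n \<le> 1 / (real n + 1)" using t by auto
    show "(\<lambda>n. 1 / (real n + 1)) \<longlonglongrightarrow> 0"
      using LIMSEQ_inverse_real_of_nat by (simp add: inverse_eq_divide add.commute)
  qed simp
  have tr: "filterlim t (at_right 0) sequentially"
    unfolding filterlim_at using t0 tpos by (simp add: always_eventually less_imp_neq[symmetric])
  have "\<exists>B. \<forall>n. norm (blinfun_apply (S (t n)) x) \<le> B" for x
  proof -
    have "(\<lambda>n. blinfun_apply (S (t n)) x) \<longlonglongrightarrow> x"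
      using filterlim_compose[OF Sright tr] by simp
    then have "Bseq (\<lambda>n. blinfun_apply (S (t n)) x)"
      using convergent_imp_Bseq convergent_def by blast
    then show ?thesis unfolding Bseq_def by blast
  qed
  from banach_steinhaus[OF this] obtain B where B: "\<And>n. norm (S (t n)) \<le> B" by blast
  obtain n :: nat where "B \<le> real n" using real_arch_simple by blast
  then show False using B[of n] t[of n] by linarith
qed

lemma bound_on: "\<exists>M\<ge>0. \<forall>t. 0 \<le> t \<and> t \<le> T0 \<longrightarrow> norm (S t) \<le> M"
proof -
  obtain d M1 where d: "d > 0" and M1: "\<And>t. 0 \<le> t \<and> t \<le> d \<Longrightarrow> norm (S t) \<le> M1"
    using local_bound by blast
  have "norm (S 0) \<le> M1" using M1[of 0] d by simp
  then have M1nn: "M1 \<ge> 0" by (rule order_trans[OF norm_ge_zero])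
  have P: "\<exists>M\<ge>0. \<forall>t. 0 \<le> t \<and> t \<le> real k * d \<longrightarrow> norm (S t) \<le> M" for k :: nat
  proof (induction k)
    case 0
    then show ?case using M1 M1nn d by (auto intro!: exI[of _ M1])
  next
    case (Suc k)
    then obtain M where M: "M \<ge> 0" "\<And>t. 0 \<le> t \<and> t \<le> real k * d \<Longrightarrow> norm (S t) \<le> M" by blast
    have "norm (S t) \<le> max M1 (M1 * M)" if "0 \<le> t" "t \<le> real (Suc k) * d" for t
    proof (cases "t \<le> d")
      case True then have "norm (S t) \<le> M1" using M1 that by simp
      then show ?thesis by simp
    next
      case False
      have sgp: "\<forall>s\<ge>0. \<forall>t\<ge>0. S (s + t) = S s o\<^sub>L S t"
        using sg unfolding C0_semigroup_def by blast
      have "S (d + (t - d)) = S d o\<^sub>L S (t - d)"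
        using sgp[rule_format, of d "t - d"] False d by linarith
      then have "S t = S d o\<^sub>L S (t - d)" by simp
      then have "norm (S t) \<le> norm (S d) * norm (S (t - d))"
        by (simp add: norm_blinfun_compose)
      also have "\<dots> \<le> M1 * M"
        using M1[of d] M(2)[of "t - d"] M(1) False that d M1nn
        by (intro mult_mono) (auto simp: algebra_simps)
      finally show ?thesis by simp
    qed
    then show ?case using M1nn M by (intro exI[of _ "max M1 (M1 * M)"]) auto
  qed
  obtain k :: nat where "T0 / d \<le> real k" using real_arch_simple by blast
  then have "T0 \<le> real k * d" using d by (simp add: field_simps)
  obtain M where "M \<ge> 0" "\<And>t. 0 \<le> t \<and> t \<le> real k * d \<Longrightarrow> norm (S t) \<le> M"
    using P[of k] by blast
  with \<open>T0 \<le> real k * d\<close> show ?thesis by (intro exI[of _ M]) auto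
qed

lemma cont: "continuous_on {0..} (\<lambda>t. blinfun_apply (S t) x)"
  unfolding continuous_on_iff
proof (intro ballI allI impI)
  fix t0 :: real and e :: real
  assume t0: "t0 \<in> {0..}" and e: "e > 0"
  obtain M where M: "M \<ge> 0" "\<And>t. 0 \<le> t \<and> t \<le> t0 + 1 \<Longrightarrow> norm (S t) \<le> M"
    using bound_on by blast
  obtain d where d: "d > 0" "\<And>h. 0 \<le> h \<and> h < d \<Longrightarrow> norm (blinfun_apply (S h) x - x) < e / (M + 1)"
  proof -
    have "e / (M + 1) > 0" using e M by simp
    from Sright_eps[OF this, of x] show ?thesis using that by blast
  qed
  have key: "M * (e / (M + 1)) < e" using M e by (simp add: field_simps)
  show "\<exists>\<delta>>0. \<forall>t\<in>{0..}. dist t t0 < \<delta> \<longrightarrow> dist (blinfun_apply (S t) x) (blinfun_apply (S t0) x) < e"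
  proof (intro exI[of _ "min d 1"] conjI ballI impI)
    fix t :: real assume t: "t \<in> {0..}" "dist t t0 < min d 1"
    show "dist (blinfun_apply (S t) x) (blinfun_apply (S t0) x) < e"
    proof (cases "t0 \<le> t")
      case True
      have "blinfun_apply (S t) x = blinfun_apply (S t0) (blinfun_apply (S (t - t0)) x)"
        using Sadd[of t0 "t - t0" x] True t0 by simp
      then have "blinfun_apply (S t) x - blinfun_apply (S t0) x
          = blinfun_apply (S t0) (blinfun_apply (S (t - t0)) x - x)"
        by (simp add: blinfun.diff_right)
      then have "norm (blinfun_apply (S t) x - blinfun_apply (S t0) x)
          \<le> norm (S t0) * norm (blinfun_apply (S (t - t0)) x - x)"
        by (simp add: norm_blinfun)
      also have "\<dots> \<le> M * (e / (M + 1))"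
        using M(2)[of t0] d(2)[of "t - t0"] t True t0 M(1)
        by (intro mult_mono) (auto simp: dist_real_def less_imp_le)
      finally show ?thesis using key by (simp add: dist_norm)
    next
      case False
      have "blinfun_apply (S t0) x = blinfun_apply (S t) (blinfun_apply (S (t0 - t)) x)"
        using Sadd[of t "t0 - t" x] False t by simp
      then have "blinfun_apply (S t) x - blinfun_apply (S t0) x
          = - blinfun_apply (S t) (blinfun_apply (S (t0 - t)) x - x)"
        by (simp add: blinfun.diff_right)
      then have "norm (blinfun_apply (S t) x - blinfun_apply (S t0) x)
          \<le> norm (S t) * norm (blinfun_apply (S (t0 - t)) x - x)"
        by (simp add: norm_blinfun)
      also have "\<dots> \<le> M * (e / (M + 1))"
        using M(2)[of t] d(2)[of "t0 - t"] t False t0 M(1)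
        by (intro mult_mono) (auto simp: dist_real_def less_imp_le)
      finally show ?thesis using key by (simp add: dist_norm)
    qed
  qed (simp add: d(1))
qed

end

context sgrp begin

definition J :: "'x \<Rightarrow> real \<Rightarrow> 'x" where
  "J x a = integral {0..a} (\<lambda>r. blinfun_apply (S r) x)"

lemma cont_Icc: "a \<ge> 0 \<Longrightarrow> continuous_on {a..b} (\<lambda>r. blinfun_apply (S r) x)"
  by (rule continuous_on_subset[OF cont]) auto

lemma int_Icc: "a \<ge> 0 \<Longrightarrow> (\<lambda>r. blinfun_apply (S r) x) integrable_on {a..b}"
  by (rule integrable_continuous_real[OF cont_Icc])

lemma J0: "J x 0 = 0" by (simp add: J_def)

lemma J_diffq:
  assumes a: "a \<ge> 0"
  shows "((\<lambda>t. (J x (a + t) - J x a) /\<^sub>R t) \<longlongrightarrow> blinfun_apply (S a) x) (at_right 0)"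
proof -
  let ?f = "\<lambda>r. blinfun_apply (S r) x"
  have "((\<lambda>u. integral {0..u} ?f) has_vector_derivative ?f a) (at a within {0..a+1})"
    using a by (intro integral_has_vector_derivative cont_Icc) auto
  then have "((\<lambda>y. (1 / norm (y - a)) *\<^sub>R (J x y - (J x a + (y - a) *\<^sub>R ?f a))) \<longlongrightarrow> 0)
      (at a within {0..a+1})"
    unfolding has_vector_derivative_def has_derivative_within J_def by blast
  then have "((\<lambda>y. (1 / norm (y - a)) *\<^sub>R (J x y - (J x a + (y - a) *\<^sub>R ?f a))) \<longlongrightarrow> 0)
      (at a within {a..a+1})"
    by (rule tendsto_within_subset) (use a in auto)
  then have "((\<lambda>y. (1 / norm (y - a)) *\<^sub>R (J x y - (J x a + (y - a) *\<^sub>R ?f a))) \<longlongrightarrow> 0)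
      (at_right a)"
    by (simp add: at_within_Icc_at_right)
  then have "((\<lambda>t. (1 / norm (t + a - a)) *\<^sub>R (J x (t + a) - (J x a + (t + a - a) *\<^sub>R ?f a))) \<longlongrightarrow> 0)
      (at_right 0)"
    by (subst (asm) at_right_to_0) (simp add: filterlim_filtermap)
  then have "((\<lambda>t. (1 / norm (t + a - a)) *\<^sub>R (J x (t + a) - (J x a + (t + a - a) *\<^sub>R ?f a)) + ?f a)
      \<longlongrightarrow> 0 + ?f a) (at_right 0)"
    by (intro tendsto_add tendsto_const)
  then have "((\<lambda>t. (1 / norm (t + a - a)) *\<^sub>R (J x (t + a) - (J x a + (t + a - a) *\<^sub>R ?f a)) + ?f a)
      \<longlongrightarrow> ?f a) (at_right 0)" by simp
  then show ?thesis
  proof (rule Lim_transform_eventually)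
    show "\<forall>\<^sub>F t in at_right 0. (1 / norm (t + a - a)) *\<^sub>R (J x (t + a) - (J x a + (t + a - a) *\<^sub>R ?f a)) + ?f a
        = (J x (a + t) - J x a) /\<^sub>R t"
      unfolding eventually_at_right_field
      by (intro exI[of _ 1]) (auto simp: algebra_simps scaleR_diff_right divide_inverse_commute)
  qed
qed

lemma S_J:
  assumes h: "h \<ge> 0" and t: "t \<ge> 0"
  shows "blinfun_apply (S t) (J x h) = J x (h + t) - J x t"
proof -
  have "blinfun_apply (S t) (J x h) = integral {0..h} (\<lambda>r. blinfun_apply (S t) (blinfun_apply (S r) x))"
    unfolding J_def by (rule integral_blinfun_apply[symmetric]) (rule int_Icc, simp)
  also have "\<dots> = integral {0..h} ((\<lambda>r. blinfun_apply (S r) x) \<circ> (+) t)"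
    by (intro integral_cong) (use t Sadd in auto)
  also have "\<dots> = integral {0 + t..h + t} (\<lambda>r. blinfun_apply (S r) x)"
    by (rule integral_shift_Icc_real)
  also have "\<dots> = J x (h + t) - J x t"
    using Henstock_Kurzweil_Integration.integral_combine[of 0 t "h + t" "\<lambda>r. blinfun_apply (S r) x"]
      h t int_Icc[of 0 x "h + t"] unfolding J_def by (simp add: algebra_simps)
  finally show ?thesis .
qed

lemma J_gen:
  assumes h: "h \<ge> 0"
  shows "gen_graph S (J x h) (blinfun_apply (S h) x - x)"
  unfolding gen_graph_def
proof -
  have "((\<lambda>t. (J x (h + t) - J x h) /\<^sub>R t - (J x (0 + t) - J x 0) /\<^sub>R t)
       \<longlongrightarrow> blinfun_apply (S h) x - blinfun_apply (S 0) x) (at_right 0)"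
    by (intro tendsto_diff J_diffq) (use h in auto)
  then have "((\<lambda>t. (J x (h + t) - J x h) /\<^sub>R t - (J x (0 + t) - J x 0) /\<^sub>R t)
       \<longlongrightarrow> blinfun_apply (S h) x - x) (at_right 0)" by (simp add: S0)
  then show "((\<lambda>t. (blinfun_apply (S t) (J x h) - J x h) /\<^sub>R t) \<longlongrightarrow> blinfun_apply (S h) x - x) (at_right 0)"
  proof (rule Lim_transform_eventually)
    show "\<forall>\<^sub>F t in at_right 0. (J x (h + t) - J x h) /\<^sub>R t - (J x (0 + t) - J x 0) /\<^sub>R t =
        (blinfun_apply (S t) (J x h) - J x h) /\<^sub>R t"
      unfolding eventually_at_right_field
      by (intro exI[of _ 1]) (use h in \<open>auto simp: S_J J0 scaleR_diff_right\<close>)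
  qed
qed

lemma adj_integral:
  assumes adj: "adj_gen_graph S \<phi> \<psi>" and h: "h \<ge> 0"
  shows "blinfun_apply \<phi> (blinfun_apply (S h) x) - blinfun_apply \<phi> x
       = integral {0..h} (\<lambda>r. blinfun_apply \<psi> (blinfun_apply (S r) x))"
proof -
  have "blinfun_apply \<phi> (blinfun_apply (S h) x - x) = blinfun_apply \<psi> (J x h)"
    using adj J_gen[OF h] unfolding adj_gen_graph_def by blast
  also have "\<dots> = integral {0..h} (\<lambda>r. blinfun_apply \<psi> (blinfun_apply (S r) x))"
    unfolding J_def by (rule integral_blinfun_apply[symmetric]) (rule int_Icc, simp)
  finally show ?thesis by (simp add: blinfun.diff_right)
qed

end

context sgrp begin

lemma mild_split:
  fixes y g :: "real \<Rightarrow> 'x"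
  assumes mild: "\<And>\<tau>. \<tau> \<in> {0..T} \<Longrightarrow> ((\<lambda>t. blinfun_apply (S (\<tau> - t)) (g t)) has_integral (y \<tau> - blinfun_apply (S \<tau>) (y 0))) {0..\<tau>}"
    and s: "0 \<le> s" and d: "0 \<le> d" and sd: "s + d \<le> T"
  shows "((\<lambda>t. blinfun_apply (S (s + d - t)) (g t)) has_integral (y (s + d) - blinfun_apply (S d) (y s))) {s..s+d}"
proof -
  let ?F = "\<lambda>t. blinfun_apply (S (s + d - t)) (g t)"
  have m1: "(?F has_integral (y (s + d) - blinfun_apply (S (s + d)) (y 0))) {0..s+d}"
    using mild[of "s+d"] s d sd by auto
  have m2: "((\<lambda>t. blinfun_apply (S (s - t)) (g t)) has_integral (y s - blinfun_apply (S s) (y 0))) {0..s}"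
    using mild[of s] s d sd by auto
  have "(blinfun_apply (S d) \<circ> (\<lambda>t. blinfun_apply (S (s - t)) (g t)) has_integral
      blinfun_apply (S d) (y s - blinfun_apply (S s) (y 0))) {0..s}"
    by (rule has_integral_linear[OF m2]) (rule blinfun.bounded_linear_right)
  moreover have "blinfun_apply (S d) (y s - blinfun_apply (S s) (y 0)) =
      blinfun_apply (S d) (y s) - blinfun_apply (S (s + d)) (y 0)"
    using Sadd[of d s "y 0"] s d by (simp add: blinfun.diff_right add.commute)
  ultimately have m3': "(blinfun_apply (S d) \<circ> (\<lambda>t. blinfun_apply (S (s - t)) (g t)) has_integral
      (blinfun_apply (S d) (y s) - blinfun_apply (S (s + d)) (y 0))) {0..s}" by simp
  have m3: "(?F has_integral (blinfun_apply (S d) (y s) - blinfun_apply (S (s + d)) (y 0))) {0..s}"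
  proof (rule has_integral_spike_finite[OF finite.emptyI _ m3'])
    fix t assume "t \<in> {0..s} - {}"
    then show "?F t = (blinfun_apply (S d) \<circ> (\<lambda>t. blinfun_apply (S (s - t)) (g t))) t"
      using Sadd[of d "s - t"] d by (auto simp: algebra_simps)
  qed
  have int2: "?F integrable_on {s..s+d}"
    by (rule integrable_subinterval_real[OF has_integral_integrable[OF m1]]) (use s in auto)
  have "integral {0..s} ?F + integral {s..s+d} ?F = integral {0..s+d} ?F"
    by (rule Henstock_Kurzweil_Integration.integral_combine) (use s d has_integral_integrable[OF m1] in auto)
  then have "integral {s..s+d} ?F = integral {0..s+d} ?F - integral {0..s} ?F"
    by (subst eq_diff_eq) (simp add: add.commute)
  also have "\<dots> = y (s + d) - blinfun_apply (S d) (y s)"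
    unfolding integral_unique[OF m1] integral_unique[OF m3] by simp
  finally have "integral {s..s+d} ?F = y (s + d) - blinfun_apply (S d) (y s)" .
  then show ?thesis using integrable_integral[OF int2] by simp
qed


context
  fixes T :: real and y g :: "real \<Rightarrow> 'x" and B :: "real \<Rightarrow> real" and \<phi> \<psi> :: "'x \<Rightarrow>\<^sub>L real"
  assumes mild: "\<And>\<tau>. \<tau> \<in> {0..T} \<Longrightarrow> ((\<lambda>t. blinfun_apply (S (\<tau> - t)) (g t)) has_integral (y \<tau> - blinfun_apply (S \<tau>) (y 0))) {0..\<tau>}"
    and ycont: "continuous_on {0..T} y"
    and Bint: "B integrable_on {0..T}" and gB: "\<And>t. t \<in> {0..T} \<Longrightarrow> norm (g t) \<le> B t"
    and adj: "adj_gen_graph S \<phi> \<psi>"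
begin

definition "MM = (SOME M. M \<ge> 0 \<and> (\<forall>t. 0 \<le> t \<and> t \<le> T \<longrightarrow> norm (S t) \<le> M))"

lemma MM: "MM \<ge> 0" "\<And>t. 0 \<le> t \<Longrightarrow> t \<le> T \<Longrightarrow> norm (S t) \<le> MM"
proof -
  have "\<exists>M. M \<ge> 0 \<and> (\<forall>t. 0 \<le> t \<and> t \<le> T \<longrightarrow> norm (S t) \<le> M)" using bound_on by blast
  then have "MM \<ge> 0 \<and> (\<forall>t. 0 \<le> t \<and> t \<le> T \<longrightarrow> norm (S t) \<le> MM)"
    unfolding MM_def by (rule someI_ex)
  then show "MM \<ge> 0" "\<And>t. 0 \<le> t \<Longrightarrow> t \<le> T \<Longrightarrow> norm (S t) \<le> MM" by auto
qed

lemma B_nonneg: "t \<in> {0..T} \<Longrightarrow> B t \<ge> 0"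
  using gB[of t] norm_ge_zero[of "g t"] by linarith

lemma Bint_sub: "0 \<le> a \<Longrightarrow> b \<le> T \<Longrightarrow> B integrable_on {a..b}"
  by (rule integrable_subinterval_real[OF Bint]) auto

lemma cmult_int: "f integrable_on A \<Longrightarrow> (\<lambda>t. c * f t) integrable_on A" for f :: "real \<Rightarrow> real"
  using integrable_on_cmult_left[of f A c] by simp

lemma psiy_int: "0 \<le> a \<Longrightarrow> b \<le> T \<Longrightarrow> (\<lambda>t. blinfun_apply \<psi> (y t)) integrable_on {a..b}"
  by (rule integrable_continuous_real, rule continuous_on_subset[of "{0..T}"])
    (auto intro!: continuous_intros ycont)

lemma step_est:
  assumes s: "0 \<le> s" and h: "0 \<le> h" and sh: "s + h \<le> T"
  shows "((\<lambda>t. blinfun_apply \<phi> (blinfun_apply (S (s + h - t)) (g t))) has_integral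
            blinfun_apply \<phi> (y (s + h) - blinfun_apply (S h) (y s))) {s..s+h}"
    and "\<bar>blinfun_apply \<phi> (y (s + h)) - blinfun_apply \<phi> (y s)
          - integral {s..s+h} (\<lambda>t. blinfun_apply \<psi> (y t))
          - blinfun_apply \<phi> (y (s + h) - blinfun_apply (S h) (y s))\<bar>
         \<le> h * (norm \<psi> * MM * integral {s..s+h} B)"
proof -
  show "((\<lambda>t. blinfun_apply \<phi> (blinfun_apply (S (s + h - t)) (g t))) has_integral
            blinfun_apply \<phi> (y (s + h) - blinfun_apply (S h) (y s))) {s..s+h}"
    using has_integral_linear[OF mild_split[where T=T, OF mild s h sh] blinfun.bounded_linear_right[of \<phi>]]
    by (simp add: o_def)
  define C where "C = norm \<psi> * MM * integral {s..s+h} B"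
  have ptw: "norm (blinfun_apply \<psi> (y (s + r)) - blinfun_apply \<psi> (blinfun_apply (S r) (y s))) \<le> C"
    if r: "r \<in> {0..h}" for r
  proof -
    have ms: "((\<lambda>t. blinfun_apply (S (s + r - t)) (g t)) has_integral (y (s + r) - blinfun_apply (S r) (y s))) {s..s+r}"
      using mild_split[where T=T, OF mild s, where d=r] r sh by auto
    have "norm (y (s + r) - blinfun_apply (S r) (y s)) \<le> integral {s..s+r} (\<lambda>t. MM * B t)"
    proof -
      have "norm (integral {s..s+r} (\<lambda>t. blinfun_apply (S (s + r - t)) (g t))) \<le> integral {s..s+r} (\<lambda>t. MM * B t)"
      proof (rule integral_norm_bound_integral)
        show "(\<lambda>t. blinfun_apply (S (s + r - t)) (g t)) integrable_on {s..s + r}"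
          using ms by blast
        show "(\<lambda>t. MM * B t) integrable_on {s..s + r}"
          using Bint_sub[of s "s+r"] s r sh by (intro cmult_int) auto
        fix t assume t: "t \<in> {s..s+r}"
        have "norm (blinfun_apply (S (s + r - t)) (g t)) \<le> norm (S (s + r - t)) * norm (g t)"
          by (rule norm_blinfun)
        also have "\<dots> \<le> MM * B t"
          using MM(2)[of "s + r - t"] gB[of t] t s r sh MM(1) by (intro mult_mono) auto
        finally show "norm (blinfun_apply (S (s + r - t)) (g t)) \<le> MM * B t" .
      qed
      then show ?thesis using integral_unique[OF ms] by simp
    qed
    also have "\<dots> \<le> integral {s..s+h} (\<lambda>t. MM * B t)"
    proof (rule integral_subset_le)
      show "(\<lambda>t. MM * B t) integrable_on {s..s + r}"
        using Bint_sub[of s "s+r"] s r sh by (intro cmult_int) auto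
      show "(\<lambda>t. MM * B t) integrable_on {s..s + h}"
        using Bint_sub[of s "s+h"] s r sh by (intro cmult_int) auto
      show "\<forall>x\<in>{s..s + h}. 0 \<le> MM * B x"
        using B_nonneg MM(1) s sh by auto
    qed (use r in auto)
    also have "\<dots> = MM * integral {s..s+h} B"
      by (simp add: integral_mult_right)
    finally have nb: "norm (y (s + r) - blinfun_apply (S r) (y s)) \<le> MM * integral {s..s+h} B" .
    have "norm (blinfun_apply \<psi> (y (s + r)) - blinfun_apply \<psi> (blinfun_apply (S r) (y s)))
        = norm (blinfun_apply \<psi> (y (s + r) - blinfun_apply (S r) (y s)))"
      by (simp add: blinfun.diff_right)
    also have "\<dots> \<le> norm \<psi> * norm (y (s + r) - blinfun_apply (S r) (y s))" by (rule norm_blinfun)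
    also have "\<dots> \<le> norm \<psi> * (MM * integral {s..s+h} B)"
      by (rule mult_left_mono[OF nb norm_ge_zero])
    finally show ?thesis unfolding C_def by (simp add: mult.assoc)
  qed
  have i1: "(\<lambda>r. blinfun_apply \<psi> (y (s + r))) integrable_on {0..h}"
    by (rule integrable_continuous_real, rule continuous_on_compose2[of "{0..T}" "\<lambda>t. blinfun_apply \<psi> (y t)"])
      (use s sh in \<open>auto intro!: continuous_intros ycont\<close>)
  have i2: "(\<lambda>r. blinfun_apply \<psi> (blinfun_apply (S r) (y s))) integrable_on {0..h}"
  proof (rule integrable_continuous_real)
    have "continuous_on {0..h} (\<lambda>r. blinfun_apply (S r) (y s))" by (rule cont_Icc) simp
    moreover have "continuous_on UNIV (blinfun_apply \<psi>)"
      by (rule linear_continuous_on[OF blinfun.bounded_linear_right])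
    ultimately show "continuous_on {0..h} (\<lambda>r. blinfun_apply \<psi> (blinfun_apply (S r) (y s)))"
      using continuous_on_compose2 by blast
  qed
  have "\<bar>integral {0..h} (\<lambda>r. blinfun_apply \<psi> (y (s + r)) - blinfun_apply \<psi> (blinfun_apply (S r) (y s)))\<bar>
      \<le> integral {0..h} (\<lambda>r. C)"
    using integral_norm_bound_integral[of "\<lambda>r. blinfun_apply \<psi> (y (s + r)) - blinfun_apply \<psi> (blinfun_apply (S r) (y s))"
        "{0..h}" "\<lambda>r. C"] ptw integrable_diff[OF i1 i2] h
        integrable_const_ivl[of C 0 h] by simp
  also have "\<dots> = h * C" using h by simp
  finally have est: "\<bar>integral {0..h} (\<lambda>r. blinfun_apply \<psi> (y (s + r))) - integral {0..h} (\<lambda>r. blinfun_apply \<psi> (blinfun_apply (S r) (y s)))\<bar>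
      \<le> h * C" using integral_diff[OF i1 i2] by simp
  have e1: "blinfun_apply \<phi> (blinfun_apply (S h) (y s)) - blinfun_apply \<phi> (y s)
      = integral {0..h} (\<lambda>r. blinfun_apply \<psi> (blinfun_apply (S r) (y s)))"
    by (rule adj_integral[OF adj h])
  have e2: "integral {s..s+h} (\<lambda>t. blinfun_apply \<psi> (y t)) = integral {0..h} (\<lambda>r. blinfun_apply \<psi> (y (s + r)))"
    using integral_shift_Icc_real[of 0 h "\<lambda>t. blinfun_apply \<psi> (y t)" s] by (simp add: o_def add.commute)
  show "\<bar>blinfun_apply \<phi> (y (s + h)) - blinfun_apply \<phi> (y s)
          - integral {s..s+h} (\<lambda>t. blinfun_apply \<psi> (y t))
          - blinfun_apply \<phi> (y (s + h) - blinfun_apply (S h) (y s))\<bar>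
         \<le> h * (norm \<psi> * MM * integral {s..s+h} B)"
    using est e1 e2 unfolding C_def by (simp add: blinfun.diff_right abs_minus_commute)
qed

definition rho :: "nat \<Rightarrow> real \<Rightarrow> real" where
  "rho N t = (T / real N) * of_int \<lceil>t / (T / real N)\<rceil> - t"

definition q :: "nat \<Rightarrow> real \<Rightarrow> real" where
  "q N t = blinfun_apply \<phi> (blinfun_apply (S (rho N t)) (g t))"

lemma rho_bounds:
  assumes T: "T > 0" and N: "N > 0"
  shows "0 \<le> rho N t" "rho N t < T / real N"
proof -
  define h where "h = T / real N"
  have h: "h > 0" using T N h_def by simp
  have c: "of_int \<lceil>t / h\<rceil> - 1 < t / h" "t / h \<le> of_int \<lceil>t / h\<rceil>"
    using ceiling_correct by auto
  have "h * (t / h) \<le> h * of_int \<lceil>t / h\<rceil>" using c h by (intro mult_left_mono) auto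
  then show "0 \<le> rho N t" using h unfolding rho_def h_def[symmetric] by simp
  have "h * of_int \<lceil>t / h\<rceil> < h * (t / h + 1)" using c h by (intro mult_strict_left_mono) auto
  then show "rho N t < T / real N" using h unfolding rho_def h_def[symmetric] by (simp add: algebra_simps)
qed

lemma rho_eq:
  assumes T: "T > 0" and N: "N > 0"
    and t: "real k * (T / real N) < t" "t \<le> real (Suc k) * (T / real N)"
  shows "rho N t = real (Suc k) * (T / real N) - t"
proof -
  define h where "h = T / real N"
  have h: "h > 0" using T N h_def by simp
  have "\<lceil>t / h\<rceil> = int k + 1"
  proof (rule ceiling_unique)
    show "of_int (int k + 1) - 1 < t / h" using t h unfolding h_def[symmetric] by (simp add: field_simps)
    show "t / h \<le> of_int (int k + 1)" using t h unfolding h_def[symmetric] by (simp add: field_simps)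
  qed
  then show ?thesis unfolding rho_def h_def[symmetric] by (simp add: algebra_simps)
qed

lemma partition_claim:
  assumes T: "T > 0" and N: "N > 0" and k: "k \<le> N"
  shows "q N integrable_on {0..real k * (T / real N)} \<and>
    \<bar>blinfun_apply \<phi> (y (real k * (T / real N))) - blinfun_apply \<phi> (y 0)
      - integral {0..real k * (T / real N)} (\<lambda>t. blinfun_apply \<psi> (y t))
      - integral {0..real k * (T / real N)} (q N)\<bar>
    \<le> (T / real N) * (norm \<psi> * MM * integral {0..real k * (T / real N)} B)"
  using k
proof (induction k)
  case 0
  then show ?case using integrable_on_refl[of "q N" "0::real"] by simp
next
  case (Suc k)
  define h where "h = T / real N"
  have h: "h > 0" using T N h_def by simp
  define s where "s = real k * h"
  have s: "0 \<le> s" using h s_def by simp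
  have sh: "s + h \<le> T"
  proof -
    have "real (Suc k) * h \<le> real N * h" using Suc.prems h by (intro mult_right_mono) auto
    also have "real N * h = T" using N unfolding h_def by simp
    finally show ?thesis unfolding s_def by (simp add: algebra_simps)
  qed
  have Sk: "real (Suc k) * h = s + h" unfolding s_def by (simp add: algebra_simps)
  from Suc.IH Suc.prems have IH1: "q N integrable_on {0..s}"
    and IH2: "\<bar>blinfun_apply \<phi> (y s) - blinfun_apply \<phi> (y 0)
      - integral {0..s} (\<lambda>t. blinfun_apply \<psi> (y t)) - integral {0..s} (q N)\<bar>
      \<le> h * (norm \<psi> * MM * integral {0..s} B)"
    unfolding s_def h_def by auto
  note st = step_est[OF s less_imp_le[OF h] sh]
  have qint: "(q N has_integral blinfun_apply \<phi> (y (s + h) - blinfun_apply (S h) (y s))) {s..s+h}"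
  proof (rule has_integral_spike_finite[OF _ _ st(1)])
    show "finite {s}" by simp
    fix t assume t: "t \<in> {s..s+h} - {s}"
    have "rho N t = real (Suc k) * (T / real N) - t"
    proof (rule rho_eq[OF T N])
      show "real k * (T / real N) < t" using t unfolding s_def h_def by auto
      have Sk': "real (Suc k) * (T / real N) = s + h" using Sk unfolding h_def by simp
      show "t \<le> real (Suc k) * (T / real N)" by (subst Sk') (use t in auto)
    qed
    then show "q N t = blinfun_apply \<phi> (blinfun_apply (S (s + h - t)) (g t))"
      unfolding q_def using Sk h_def by simp
  qed
  have q_all: "(q N has_integral (integral {0..s} (q N) + blinfun_apply \<phi> (y (s + h) - blinfun_apply (S h) (y s)))) {0..s+h}"
    by (rule has_integral_combine[OF s _ integrable_integral[OF IH1] qint]) (use h in simp)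
  have psi_c: "integral {0..s} (\<lambda>t. blinfun_apply \<psi> (y t)) + integral {s..s+h} (\<lambda>t. blinfun_apply \<psi> (y t))
      = integral {0..s+h} (\<lambda>t. blinfun_apply \<psi> (y t))"
    by (rule Henstock_Kurzweil_Integration.integral_combine) (use s h sh psiy_int in auto)
  have B_c: "integral {0..s} B + integral {s..s+h} B = integral {0..s+h} B"
    by (rule Henstock_Kurzweil_Integration.integral_combine) (use s h sh Bint_sub in auto)
  have "\<bar>blinfun_apply \<phi> (y (s+h)) - blinfun_apply \<phi> (y 0)
      - integral {0..s+h} (\<lambda>t. blinfun_apply \<psi> (y t)) - integral {0..s+h} (q N)\<bar>
      \<le> h * (norm \<psi> * MM * integral {0..s} B) + h * (norm \<psi> * MM * integral {s..s+h} B)"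
    using IH2 st(2) psi_c integral_unique[OF q_all] by linarith
  also have "\<dots> = h * (norm \<psi> * MM * integral {0..s+h} B)"
    unfolding B_c[symmetric] by (simp add: distrib_left)
  finally show ?case using q_all Sk unfolding h_def[symmetric] by (auto simp: Sk)
qed

lemma weak_identity:
  assumes T: "T > 0"
  shows "((\<lambda>t. blinfun_apply \<psi> (y t) + blinfun_apply \<phi> (g t)) has_integral
           (blinfun_apply \<phi> (y T) - blinfun_apply \<phi> (y 0))) {0..T}"
proof -
  define f where "f n = q (Suc n)" for n
  define H where "H t = norm \<phi> * MM * B t" for t
  have NT: "real (Suc n) * (T / real (Suc n)) = T" for n by simp
  have fint: "f n integrable_on {0..T}" for n
    using partition_claim[OF T, of "Suc n" "Suc n"] unfolding f_def NT by simp
  have Hint: "H integrable_on {0..T}" unfolding H_def by (intro cmult_int Bint)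
  have fle: "norm (f n t) \<le> H t" if t: "t \<in> {0..T}" for n t
  proof -
    have r: "0 \<le> rho (Suc n) t" "rho (Suc n) t < T / real (Suc n)"
      using rho_bounds[OF T, of "Suc n" t] by auto
    have "T / real (Suc n) \<le> T" using T by (simp add: divide_le_eq)
    then have rT: "rho (Suc n) t \<le> T" using r by linarith
    have "norm (f n t) \<le> norm \<phi> * norm (blinfun_apply (S (rho (Suc n) t)) (g t))"
      unfolding f_def q_def by (rule norm_blinfun)
    also have "\<dots> \<le> norm \<phi> * (norm (S (rho (Suc n) t)) * norm (g t))"
      by (intro mult_left_mono norm_blinfun norm_ge_zero)
    also have "\<dots> \<le> norm \<phi> * (MM * B t)"
      using MM(2)[OF r(1) rT] gB[OF t] MM(1)
      by (intro mult_left_mono mult_mono norm_ge_zero) auto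
    finally show ?thesis unfolding H_def by (simp add: mult.assoc)
  qed
  have fconv: "(\<lambda>n. f n t) \<longlonglongrightarrow> blinfun_apply \<phi> (g t)" for t
  proof -
    have "(\<lambda>n. blinfun_apply (S (rho (Suc n) t)) (g t)) \<longlonglongrightarrow> g t"
    proof (rule LIMSEQ_I)
      fix e :: real assume e: "e > 0"
      obtain d where d: "d > 0" "\<And>h. 0 \<le> h \<and> h < d \<Longrightarrow> norm (blinfun_apply (S h) (g t) - g t) < e"
        using Sright_eps[OF e, of "g t"] by blast
      obtain n0 :: nat where n0: "T / d \<le> real n0" using real_arch_simple by blast
      show "\<exists>no. \<forall>n\<ge>no. norm (blinfun_apply (S (rho (Suc n) t)) (g t) - g t) < e"
      proof (intro exI[of _ n0] allI impI)
        fix n assume n: "n \<ge> n0"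
        have "T / d < real (Suc n)" using n0 n by simp
        then have "T < d * real (Suc n)" using d(1) by (simp add: divide_less_eq mult.commute)
        then have "T / real (Suc n) < d" by (simp add: divide_less_eq)
        then show "norm (blinfun_apply (S (rho (Suc n) t)) (g t) - g t) < e"
          using rho_bounds[OF T, of "Suc n" t] d(2) by auto
      qed
    qed
    then show ?thesis unfolding f_def q_def by (intro blinfun.tendsto tendsto_const)
  qed
  have dc: "(\<lambda>t. blinfun_apply \<phi> (g t)) integrable_on {0..T}"
    "(\<lambda>n. integral {0..T} (f n)) \<longlonglongrightarrow> integral {0..T} (\<lambda>t. blinfun_apply \<phi> (g t))"
    using dominated_convergence[of f "{0..T}" H "\<lambda>t. blinfun_apply \<phi> (g t)", OF fint Hint fle fconv]
    by auto
  define K where "K = norm \<psi> * MM * integral {0..T} B"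
  define c where "c = blinfun_apply \<phi> (y T) - blinfun_apply \<phi> (y 0) - integral {0..T} (\<lambda>t. blinfun_apply \<psi> (y t))"
  have l1: "(\<lambda>n. c - integral {0..T} (f n)) \<longlonglongrightarrow> c - integral {0..T} (\<lambda>t. blinfun_apply \<phi> (g t))"
    by (intro tendsto_diff tendsto_const dc(2))
  have l2: "(\<lambda>n. c - integral {0..T} (f n)) \<longlonglongrightarrow> 0"
  proof (rule Lim_null_comparison)
    show "\<forall>\<^sub>F n in sequentially. norm (c - integral {0..T} (f n)) \<le> (T / real (Suc n)) * K"
      using partition_claim[OF T, of "Suc n" "Suc n" for n] unfolding f_def NT c_def K_def
      by (auto intro!: always_eventually)
    have "(\<lambda>n. T / real (Suc n)) \<longlonglongrightarrow> 0"
      using LIMSEQ_Suc[OF lim_const_over_n[of T]] by simp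
    then show "(\<lambda>n. T / real (Suc n) * K) \<longlonglongrightarrow> 0" by (rule tendsto_mult_left_zero)
  qed
  have "c - integral {0..T} (\<lambda>t. blinfun_apply \<phi> (g t)) = 0" using LIMSEQ_unique[OF l1 l2] .
  then have "integral {0..T} (\<lambda>t. blinfun_apply \<psi> (y t)) + integral {0..T} (\<lambda>t. blinfun_apply \<phi> (g t))
      = blinfun_apply \<phi> (y T) - blinfun_apply \<phi> (y 0)" unfolding c_def by simp
  moreover have "((\<lambda>t. blinfun_apply \<psi> (y t) + blinfun_apply \<phi> (g t)) has_integral
      (integral {0..T} (\<lambda>t. blinfun_apply \<psi> (y t)) + integral {0..T} (\<lambda>t. blinfun_apply \<phi> (g t)))) {0..T}"
    using psiy_int[of 0 T] dc(1) by (intro has_integral_add integrable_integral) auto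
  ultimately show ?thesis by simp
qed

end

end

context sgrp begin

lemma Scomm: "r \<ge> 0 \<Longrightarrow> t \<ge> 0 \<Longrightarrow> blinfun_apply (S t) (blinfun_apply (S r) x) = blinfun_apply (S r) (blinfun_apply (S t) x)"
  using Sadd[of t r x] Sadd[of r t x] by (simp add: add.commute)

lemma gen_shift:
  assumes g: "gen_graph S y z" and r: "r \<ge> 0"
  shows "gen_graph S (blinfun_apply (S r) y) (blinfun_apply (S r) z)"
  unfolding gen_graph_def
proof -
  have "((\<lambda>t. blinfun_apply (S r) ((blinfun_apply (S t) y - y) /\<^sub>R t)) \<longlongrightarrow> blinfun_apply (S r) z) (at_right 0)"
    using g unfolding gen_graph_def by (intro blinfun.tendsto tendsto_const)
  then show "((\<lambda>t. (blinfun_apply (S t) (blinfun_apply (S r) y) - blinfun_apply (S r) y) /\<^sub>R t) \<longlongrightarrow> blinfun_apply (S r) z) (at_right 0)"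
  proof (rule Lim_transform_eventually)
    show "\<forall>\<^sub>F t in at_right 0. blinfun_apply (S r) ((blinfun_apply (S t) y - y) /\<^sub>R t) =
        (blinfun_apply (S t) (blinfun_apply (S r) y) - blinfun_apply (S r) y) /\<^sub>R t"
      unfolding eventually_at_right_field
      by (intro exI[of _ 1]) (use r in \<open>auto simp: Scomm blinfun.scaleR_right blinfun.diff_right\<close>)
  qed
qed

lemma adj_shift:
  assumes adj: "adj_gen_graph S \<phi> \<psi>" and r: "r \<ge> 0"
  shows "adj_gen_graph S (\<phi> o\<^sub>L S r) (\<psi> o\<^sub>L S r)"
  using adj gen_shift[OF _ r] unfolding adj_gen_graph_def by auto

lemma J_lin: "J (x + x') h = J x h + J x' h" "J (c *\<^sub>R x) h = c *\<^sub>R J x h" if "h \<ge> 0" for x x'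
proof -
  show "J (x + x') h = J x h + J x' h"
    unfolding J_def using int_Icc[of 0 _ h]
    by (simp add: blinfun.add_right integral_add)
  show "J (c *\<^sub>R x) h = c *\<^sub>R J x h"
    unfolding J_def by (simp add: blinfun.scaleR_right)
qed

lemma J_bound:
  assumes h: "h \<ge> 0"
  shows "\<exists>K\<ge>0. \<forall>x. norm (J x h) \<le> K * norm x"
proof -
  obtain M where M: "M \<ge> 0" "\<And>t. 0 \<le> t \<and> t \<le> h \<Longrightarrow> norm (S t) \<le> M" using bound_on by blast
  have "norm (J x h) \<le> (h * M) * norm x" for x
  proof -
    have "norm (J x h) \<le> integral {0..h} (\<lambda>r. M * norm x)"
      unfolding J_def
    proof (rule integral_norm_bound_integral)
      show "(\<lambda>r. blinfun_apply (S r) x) integrable_on {0..h}" by (rule int_Icc) simp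
      show "(\<lambda>r. M * norm x) integrable_on {0..h}" by (rule integrable_const_ivl)
      fix r assume "r \<in> {0..h}"
      then have "norm (S r) \<le> M" using M(2)[of r] by simp
      then show "norm (blinfun_apply (S r) x) \<le> M * norm x"
        by (rule order_trans[OF norm_blinfun mult_right_mono[OF _ norm_ge_zero]])
    qed
    also have "\<dots> = h * (M * norm x)" using h by simp
    finally show ?thesis by (simp add: mult.assoc)
  qed
  then show ?thesis using h M by (intro exI[of _ "h * M"]) auto
qed

lemma J_bl: "h \<ge> 0 \<Longrightarrow> bounded_linear (\<lambda>x. J x h)"
proof -
  assume h: "h \<ge> 0"
  obtain K where K: "K \<ge> 0" "\<And>x. norm (J x h) \<le> K * norm x" using J_bound[OF h] by blast
  show ?thesis
    by (rule bounded_linear_intro[of _ K]) (use J_lin[OF h] K in \<open>auto simp: mult.commute\<close>)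
qed

lemma J_gen_D:
  assumes g: "gen_graph S y z" and h: "h \<ge> 0"
  shows "J z h = blinfun_apply (S h) y - y"
proof -
  interpret bl: bounded_linear "\<lambda>x. J x h" by (rule J_bl[OF h])
  have l1: "((\<lambda>t. J ((blinfun_apply (S t) y - y) /\<^sub>R t) h) \<longlongrightarrow> J z h) (at_right 0)"
    using g unfolding gen_graph_def by (rule bl.tendsto)
  have l2: "((\<lambda>t. (blinfun_apply (S t) (J y h) - J y h) /\<^sub>R t) \<longlongrightarrow> blinfun_apply (S h) y - y) (at_right 0)"
    using J_gen[OF h, of y] unfolding gen_graph_def .
  have SJ: "blinfun_apply (S t) (J y h) = J (blinfun_apply (S t) y) h" if t: "t \<ge> 0" for t
  proof -
    have "blinfun_apply (S t) (J y h) = integral {0..h} (\<lambda>r. blinfun_apply (S t) (blinfun_apply (S r) y))"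
      unfolding J_def by (rule integral_blinfun_apply[symmetric]) (rule int_Icc, simp)
    also have "\<dots> = J (blinfun_apply (S t) y) h"
      unfolding J_def by (intro integral_cong) (use t Scomm in auto)
    finally show ?thesis .
  qed
  have "\<forall>\<^sub>F t in at_right 0. J ((blinfun_apply (S t) y - y) /\<^sub>R t) h = (blinfun_apply (S t) (J y h) - J y h) /\<^sub>R t"
    unfolding eventually_at_right_field
    by (intro exI[of _ 1]) (simp add: SJ bl.scaleR bl.diff)
  then have l1': "((\<lambda>t. (blinfun_apply (S t) (J y h) - J y h) /\<^sub>R t) \<longlongrightarrow> J z h) (at_right 0)"
    by (rule Lim_transform_eventually[OF l1])
  show ?thesis using tendsto_unique[OF _ l1' l2] by simp
qed

lemma D_adj_separates:
  assumes sep: "\<And>\<phi> \<psi>. adj_gen_graph S \<phi> \<psi> \<Longrightarrow> blinfun_apply \<phi> z = 0"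
  shows "z = 0"
proof -
  obtain ch :: "'x \<Rightarrow>\<^sub>L real" where ch: "blinfun_apply ch z = norm z" using hahn_banach_norm by blast
  have zero_h: "blinfun_apply ch (J z h) = 0" if h: "h > 0" for h
  proof -
    define ph where "ph = Blinfun (\<lambda>x. blinfun_apply ch (J x h))"
    have blp: "bounded_linear (\<lambda>x. blinfun_apply ch (J x h))"
      using bounded_linear_compose[OF blinfun.bounded_linear_right[of ch] J_bl[of h]] h by simp
    define ps where "ps = (ch o\<^sub>L S h) - ch"
    have "adj_gen_graph S ph ps"
      unfolding adj_gen_graph_def
    proof (intro allI impI)
      fix y z' assume "gen_graph S y z'"
      from J_gen_D[OF this] h show "blinfun_apply ph z' = blinfun_apply ps y"
        unfolding ph_def ps_def using blp by (simp add: bounded_linear_Blinfun_apply blinfun.diff_right minus_blinfun.rep_eq)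
    qed
    from sep[OF this] show ?thesis unfolding ph_def using blp by (simp add: bounded_linear_Blinfun_apply)
  qed
  have "((\<lambda>t. blinfun_apply ch ((J z (0 + t) - J z 0) /\<^sub>R t)) \<longlongrightarrow> blinfun_apply ch (blinfun_apply (S 0) z)) (at_right 0)"
    by (intro blinfun.tendsto tendsto_const J_diffq) simp
  then have lim: "((\<lambda>t. blinfun_apply ch ((J z (0 + t) - J z 0) /\<^sub>R t)) \<longlongrightarrow> norm z) (at_right 0)"
    by (simp add: S0 ch)
  have "\<forall>\<^sub>F t in at_right 0. blinfun_apply ch ((J z (0 + t) - J z 0) /\<^sub>R t) = 0"
    unfolding eventually_at_right_field
    by (intro exI[of _ 1]) (auto simp: J0 blinfun.scaleR_right zero_h)
  then have "((\<lambda>t. blinfun_apply ch ((J z (0 + t) - J z 0) /\<^sub>R t)) \<longlongrightarrow> 0) (at_right 0)"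
    by (rule tendsto_eventually)
  from tendsto_unique[OF _ lim this] show "z = 0" by simp
qed

lemma const_mild:
  assumes feas: "\<And>\<phi> \<psi>. adj_gen_graph S \<phi> \<psi> \<Longrightarrow> blinfun_apply \<psi> ys + blinfun_apply \<phi> w = 0"
    and tau: "\<tau> \<ge> 0"
  shows "((\<lambda>t. blinfun_apply (S (\<tau> - t)) w) has_integral (ys - blinfun_apply (S \<tau>) ys)) {0..\<tau>}"
proof -
  have Jeq: "J w \<tau> = ys - blinfun_apply (S \<tau>) ys"
  proof -
    have "J w \<tau> - (ys - blinfun_apply (S \<tau>) ys) = 0"
    proof (rule D_adj_separates)
      fix \<phi> \<psi> assume adj: "adj_gen_graph S \<phi> \<psi>"
      have pt: "blinfun_apply \<psi> (blinfun_apply (S r) ys) = - blinfun_apply \<phi> (blinfun_apply (S r) w)" if "r \<in> {0..\<tau>}" for r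
        using feas[OF adj_shift[OF adj, of r]] that by simp
      have "blinfun_apply \<phi> (blinfun_apply (S \<tau>) ys) - blinfun_apply \<phi> ys
          = integral {0..\<tau>} (\<lambda>r. blinfun_apply \<psi> (blinfun_apply (S r) ys))"
        by (rule adj_integral[OF adj tau])
      also have "\<dots> = integral {0..\<tau>} (\<lambda>r. - blinfun_apply \<phi> (blinfun_apply (S r) w))"
        by (rule integral_cong) (use pt in auto)
      also have "\<dots> = - blinfun_apply \<phi> (J w \<tau>)"
        unfolding J_def integral_neg[symmetric]
        by (subst integral_blinfun_apply[symmetric]) (use int_Icc in auto)
      finally show "blinfun_apply \<phi> (J w \<tau> - (ys - blinfun_apply (S \<tau>) ys)) = 0"
        by (simp add: blinfun.diff_right)
    qed
    then show ?thesis by simp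
  qed
  have ci: "continuous_on {0..\<tau>} (\<lambda>t. blinfun_apply (S (\<tau> - t)) w)"
  proof -
    have c1: "continuous_on {0..\<tau>} (\<lambda>t. \<tau> - t)" by (intro continuous_intros)
    show ?thesis
      by (rule continuous_on_compose2[OF cont c1, of w]) auto
  qed
  have "integral {0..\<tau>} (\<lambda>t. blinfun_apply (S (\<tau> - t)) w) = J w \<tau>"
  proof -
    have "integral {0..\<tau>} (\<lambda>t. blinfun_apply (S (\<tau> - t)) w)
        = integral {-\<tau>..0} (\<lambda>x. blinfun_apply (S (\<tau> + x)) w)"
      using Henstock_Kurzweil_Integration.integral_reflect_real[of 0 "-\<tau>" "\<lambda>x. blinfun_apply (S (\<tau> + x)) w"] by simp
    also have "\<dots> = integral {-\<tau>..0} ((\<lambda>r. blinfun_apply (S r) w) \<circ> (+) \<tau>)"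
      by (simp add: o_def)
    also have "\<dots> = integral {-\<tau> + \<tau>..0 + \<tau>} (\<lambda>r. blinfun_apply (S r) w)"
      by (rule integral_shift_Icc_real)
    finally show ?thesis unfolding J_def by simp
  qed
  then show ?thesis using integrable_integral[OF integrable_continuous_real[OF ci]] Jeq
    by simp
qed

end

lemma Icc_sets: "{a..b::real} \<in> sets lebesgue" by simp

lemma meas_comp:
  fixes y :: "real \<Rightarrow> 'x::real_normed_vector" and u :: "real \<Rightarrow> 'u::real_normed_vector"
    and F :: "'x \<Rightarrow> 'u \<Rightarrow> real"
  assumes sm: "strongly_measurable_on {0..T} u" and yc: "continuous_on {0..T} y"
    and Fc: "continuous_on UNIV (\<lambda>(a, b). F a b)"
  shows "(\<lambda>t. F (y t) (u t)) \<in> borel_measurable (lebesgue_on {0..T})"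
proof -
  let ?I = "{0..T}"
  obtain s where sf: "\<And>n. simple_function (lebesgue_on ?I) (s n)"
    and ae: "AE t in lebesgue_on ?I. (\<lambda>n. s n t) \<longlonglongrightarrow> u t"
    using sm unfolding strongly_measurable_on_def by blast
  have sp: "space (lebesgue_on ?I) = ?I" by simp
  have Fcv: "continuous_on ?I (\<lambda>t. F (y t) v)" for v
  proof -
    have c1: "continuous_on ?I (\<lambda>t. (y t, v))" by (intro continuous_intros yc)
    show ?thesis using continuous_on_compose2[OF Fc c1] by auto
  qed
  have mn: "(\<lambda>t. F (y t) (s n t)) \<in> borel_measurable (lebesgue_on ?I)" for n
  proof -
    define V where "V = s n ` ?I"
    have fin: "finite V" and pre: "\<And>v. v \<in> V \<Longrightarrow> s n -` {v} \<inter> ?I \<in> sets (lebesgue_on ?I)"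
      using sf[of n] unfolding simple_function_def V_def by auto
    have "(\<lambda>t. \<Sum>v\<in>V. indicator (s n -` {v} \<inter> ?I) t * F (y t) v) \<in> borel_measurable (lebesgue_on ?I)"
      using pre continuous_imp_measurable_on_sets_lebesgue[OF Fcv]
      by (intro borel_measurable_sum borel_measurable_times borel_measurable_indicator) auto
    moreover have "(\<Sum>v\<in>V. indicator (s n -` {v} \<inter> ?I) t * F (y t) v) = F (y t) (s n t)" if t: "t \<in> ?I" for t
    proof -
      have "(\<Sum>v\<in>V. indicator (s n -` {v} \<inter> ?I) t * F (y t) v) = (\<Sum>v\<in>V. if v = s n t then F (y t) v else 0)"
        using t by (intro sum.cong) (auto simp: indicator_def)
      also have "\<dots> = F (y t) (s n t)" using fin t V_def by (simp add: sum.delta')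
      finally show ?thesis .
    qed
    ultimately show ?thesis
      by (subst measurable_cong[where g="\<lambda>t. \<Sum>v\<in>V. indicator (s n -` {v} \<inter> ?I) t * F (y t) v"]) auto
  qed
  then have mo: "(\<lambda>t. F (y t) (s n t)) measurable_on ?I" for n
    by (simp add: measurable_on_iff_borel_measurable)
  obtain N where N: "{t \<in> space (lebesgue_on ?I). \<not> (\<lambda>n. s n t) \<longlonglongrightarrow> u t} \<subseteq> N"
    "emeasure (lebesgue_on ?I) N = 0" "N \<in> sets (lebesgue_on ?I)"
    using AE_E[OF ae] by blast
  have "N \<in> null_sets (lebesgue_on ?I)" using N by auto
  then have "N \<in> null_sets lebesgue" using null_sets_restrict_space[of ?I lebesgue N] by simp
  then have negN: "negligible N" by (simp add: negligible_iff_null_sets)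
  have "(\<lambda>t. F (y t) (u t)) measurable_on ?I"
  proof (rule measurable_on_limit[OF mo negN])
    fix t assume t: "t \<in> ?I - N"
    then have "(\<lambda>n. s n t) \<longlonglongrightarrow> u t" using N(1) by auto
    then have "(\<lambda>n. (y t, s n t)) \<longlonglongrightarrow> (y t, u t)" by (intro tendsto_intros)
    from continuous_on_tendsto_compose[OF Fc this] show "(\<lambda>n. F (y t) (s n t)) \<longlonglongrightarrow> F (y t) (u t)"
      by simp
  qed
  then show ?thesis by (simp add: measurable_on_iff_borel_measurable)
qed

lemma leb_to_abs:
  assumes "integrable (lebesgue_on {a..b::real}) f"
  shows "f absolutely_integrable_on {a..b}"
  using assms unfolding absolutely_integrable_on_def set_integrable_def
  by (subst (asm) integrable_restrict_space) auto

lemma norm_u_int: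
  fixes u :: "real \<Rightarrow> 'u::real_normed_vector"
  assumes L2: "L2_on {0..T} u"
  shows "(\<lambda>t. norm (u t)) integrable_on {0..T}"
proof -
  have sm: "strongly_measurable_on {0..T} u" and i2: "integrable (lebesgue_on {0..T}) (\<lambda>t. (norm (u t))\<^sup>2)"
    using L2 unfolding L2_on_def by auto
  have m: "(\<lambda>t. norm (u t)) \<in> borel_measurable (lebesgue_on {0..T})"
  proof -
    have "continuous_on UNIV (\<lambda>(a::real, b). norm (b::'u))" by (simp add: case_prod_unfold continuous_intros)
    from meas_comp[OF sm continuous_on_const[of _ "0::real"] this] show ?thesis by simp
  qed
  have "(\<lambda>t. (norm (u t))\<^sup>2) integrable_on {0..T}"
    using leb_to_abs[OF i2] set_lebesgue_integral_eq_integral by blast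
  then have "(\<lambda>t. 1 + (norm (u t))\<^sup>2) integrable_on {0..T}"
    by (intro integrable_add integrable_const_ivl)
  moreover have "norm (norm (u t)) \<le> 1 + (norm (u t))\<^sup>2" for t
  proof -
    have "0 \<le> (norm (u t) - 1)\<^sup>2" by simp
    then have "2 * norm (u t) \<le> 1 + (norm (u t))\<^sup>2" by (simp add: power2_eq_square algebra_simps)
    then have "norm (u t) \<le> 1 + (norm (u t))\<^sup>2" using norm_ge_zero[of "u t"] by linarith
    then show ?thesis by simp
  qed
  ultimately show ?thesis
    by (intro measurable_bounded_by_integrable_imp_integrable[OF m]) auto
qed

lemma abs_to_leb:
  assumes "f absolutely_integrable_on {a..b::real}"
  shows "integrable (lebesgue_on {a..b}) f"
  using assms unfolding absolutely_integrable_on_def set_integrable_def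
  by (subst integrable_restrict_space) auto

lemma ext_int_restr: "ext_int {a..b} g =
   enn2ereal (\<integral>\<^sup>+ t. ennreal (g t) \<partial>lebesgue_on {a..b}) - enn2ereal (\<integral>\<^sup>+ t. ennreal (- g t) \<partial>lebesgue_on {a..b})"
  unfolding ext_int_def by (simp add: nn_integral_restrict_space)

lemma ext_int_ineq:
  fixes w a h :: "real \<Rightarrow> real"
  assumes wm: "w \<in> borel_measurable (lebesgue_on {0..\<tau>})"
    and am: "a \<in> borel_measurable (lebesgue_on {0..\<tau>})"
    and hab: "h absolutely_integrable_on {0..\<tau>}"
    and hint: "(h has_integral (p - q)) {0..\<tau>}"
    and a0: "\<And>t. t \<in> {0..\<tau>} \<Longrightarrow> a t \<ge> 0"
    and wlb: "\<And>t. t \<in> {0..\<tau>} \<Longrightarrow> w t \<ge> b"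
    and ineq: "\<And>t. t \<in> {0..\<tau>} \<Longrightarrow> w t + h t \<ge> a t"
  shows "ereal p + ext_int {0..\<tau>} w \<ge> ereal q + ext_int {0..\<tau>} a"
proof -
  let ?M = "lebesgue_on {0..\<tau>}"
  have sp: "space ?M = {0..\<tau>}" by simp
  have hL: "integrable ?M h" by (rule abs_to_leb[OF hab])
  have hm: "h \<in> borel_measurable ?M" using hL by auto
  define Pw where "Pw = (\<integral>\<^sup>+ t. ennreal (w t) \<partial>?M)"
  define Nw where "Nw = (\<integral>\<^sup>+ t. ennreal (- w t) \<partial>?M)"
  define Hp where "Hp = (\<integral>\<^sup>+ t. ennreal (h t) \<partial>?M)"
  define Hn where "Hn = (\<integral>\<^sup>+ t. ennreal (- h t) \<partial>?M)"
  define A where "A = (\<integral>\<^sup>+ t. ennreal (a t) \<partial>?M)"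
  have An: "(\<integral>\<^sup>+ t. ennreal (- a t) \<partial>?M) = 0"
  proof -
    have "(\<integral>\<^sup>+ t. ennreal (- a t) \<partial>?M) = (\<integral>\<^sup>+ t. 0 \<partial>?M)"
      by (rule nn_integral_cong) (use a0 in \<open>auto simp: ennreal_eq_0_iff\<close>)
    then show ?thesis by simp
  qed
  have ptw: "ennreal (w t) + ennreal (h t) \<ge> ennreal (a t) + ennreal (- w t) + ennreal (- h t)"
    if t: "t \<in> {0..\<tau>}" for t
  proof -
    have e: "ennreal (- w t) = ennreal (max 0 (- w t))" "ennreal (- h t) = ennreal (max 0 (- h t))"
      "ennreal (w t) = ennreal (max 0 (w t))" "ennreal (h t) = ennreal (max 0 (h t))"
      by (simp_all only: ennreal_max_0)
    have "ennreal (a t) + ennreal (- w t) + ennreal (- h t) = ennreal (a t + max 0 (- w t) + max 0 (- h t))"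
      unfolding e(1,2) using a0[OF t] by (simp add: ennreal_plus)
    also have "\<dots> \<le> ennreal (max 0 (w t) + max 0 (h t))"
      using ineq[OF t] by (intro ennreal_leI) auto
    also have "\<dots> = ennreal (w t) + ennreal (h t)"
      unfolding e(3,4) by (simp add: ennreal_plus)
    finally show ?thesis .
  qed
  have main: "A + Nw + Hn \<le> Pw + Hp"
  proof -
    have "A + Nw + Hn = (\<integral>\<^sup>+ t. ennreal (a t) + ennreal (- w t) + ennreal (- h t) \<partial>?M)"
      unfolding A_def Nw_def Hn_def using am wm hm
      by (simp add: nn_integral_add)
    also have "\<dots> \<le> (\<integral>\<^sup>+ t. ennreal (w t) + ennreal (h t) \<partial>?M)"
      by (rule nn_integral_mono) (use ptw in simp)
    also have "\<dots> = Pw + Hp"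
      unfolding Pw_def Hp_def using wm hm by (simp add: nn_integral_add)
    finally show ?thesis .
  qed
  have Nwf: "Nw < \<infinity>"
  proof -
    have "Nw \<le> (\<integral>\<^sup>+ t. ennreal (- b) \<partial>?M)"
      unfolding Nw_def by (rule nn_integral_mono) (use wlb in \<open>auto intro!: ennreal_leI\<close>)
    also have "\<dots> = ennreal (- b) * emeasure ?M {0..\<tau>}" by (simp add: nn_integral_const)
    also have "\<dots> < \<infinity>"
      by (simp add: emeasure_restrict_space ennreal_mult_less_top emeasure_lborel_Icc_eq)
    finally show ?thesis .
  qed
  have Hpf: "Hp < \<infinity>" and Hnf: "Hn < \<infinity>"
    using integrableD(2,3)[OF hL] unfolding Hp_def Hn_def by (auto simp: top.not_eq_extremum)
  have hval: "enn2real Hp - enn2real Hn = p - q"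
  proof -
    have "integral\<^sup>L ?M h = enn2real Hp - enn2real Hn"
      unfolding Hp_def Hn_def by (rule real_lebesgue_integral_def[OF hL])
    moreover have "integral\<^sup>L ?M h = integral {0..\<tau>} h"
      using set_lebesgue_integral_eq_integral(2)[OF hab]
      by (simp add: integral_restrict_space set_lebesgue_integral_def)
    ultimately show ?thesis using integral_unique[OF hint] by simp
  qed
  have extw: "ext_int {0..\<tau>} w = enn2ereal Pw - enn2ereal Nw"
    unfolding ext_int_restr Pw_def Nw_def ..
  have exta: "ext_int {0..\<tau>} a = enn2ereal A"
    unfolding ext_int_restr A_def An by (simp add: zero_ennreal.rep_eq)
  show ?thesis
  proof (cases "Pw = \<infinity>")
    case True
    obtain nw where nw: "nw \<ge> 0" "Nw = ennreal nw" using Nwf by (cases Nw rule: ennreal_cases) auto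
    show ?thesis using True nw by (simp add: extw)
  next
    case False
    then have Pwf: "Pw < \<infinity>" by (simp add: top.not_eq_extremum)
    have Af: "A < \<infinity>"
    proof -
      have "A \<le> A + Nw + Hn" by (simp add: add.assoc)
      also have "\<dots> \<le> Pw + Hp" by (rule main)
      also have "\<dots> < \<infinity>" using Pwf Hpf by (simp add: ennreal_add_less_top)
      finally show ?thesis .
    qed
    obtain pw where pw: "pw \<ge> 0" "Pw = ennreal pw" using Pwf by (cases Pw rule: ennreal_cases) auto
    obtain nw where nw: "nw \<ge> 0" "Nw = ennreal nw" using Nwf by (cases Nw rule: ennreal_cases) auto
    obtain hp where hp: "hp \<ge> 0" "Hp = ennreal hp" using Hpf by (cases Hp rule: ennreal_cases) auto
    obtain hn where hn: "hn \<ge> 0" "Hn = ennreal hn" using Hnf by (cases Hn rule: ennreal_cases) auto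
    obtain aa where aa: "aa \<ge> 0" "A = ennreal aa" using Af by (cases A rule: ennreal_cases) auto
    have "ennreal (aa + nw + hn) \<le> ennreal (pw + hp)"
      using main pw nw hp hn aa by (simp add: ennreal_plus del: ennreal_plus_if)
    moreover have "0 \<le> pw + hp" using pw hp by simp
    ultimately have r: "aa + nw + hn \<le> pw + hp" using ennreal_le_iff by blast
    have "hp - hn = p - q" using hval hp hn by simp
    then show ?thesis using r pw nw hp hn aa by (simp add: extw exta)
  qed
qed

lemma ext_int_zero: "ext_int I (\<lambda>t. 0) = 0"
  unfolding ext_int_def by (simp add: zero_ennreal.rep_eq)

lemma ext_int_const:
  assumes T: "T \<ge> 0"
  shows "ext_int {0..T} (\<lambda>t. c) = ereal (c * T)"
proof -
  have e: "(\<integral>\<^sup>+ t\<in>{0..T}. ennreal d \<partial>lebesgue) = ennreal d * ennreal T" for d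
    using T by (simp add: nn_integral_cmult_indicator)
  show ?thesis
  proof (cases "c \<ge> 0")
    case True
    then have "ennreal (- c) = 0" by (simp add: ennreal_eq_0_iff)
    then show ?thesis unfolding ext_int_def e using T True
      by (simp add: ennreal_mult'[symmetric] zero_ennreal.rep_eq)
  next
    case False
    then have "ennreal c = 0" by (simp add: ennreal_eq_0_iff)
    moreover have "- (c * T) \<ge> 0" using False T by (simp add: mult_nonpos_nonneg)
    ultimately show ?thesis unfolding ext_int_def e using T False
      by (simp add: ennreal_mult'[symmetric] zero_ennreal.rep_eq enn2ereal_ennreal)
  qed
qed

lemma ext_int_of_integrable:
  assumes i: "integrable (lebesgue_on {a..b}) v"
  shows "ext_int {a..b} v = ereal (integral\<^sup>L (lebesgue_on {a..b}) v)"
proof -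
  let ?M = "lebesgue_on {a..b::real}"
  have P: "(\<integral>\<^sup>+ t. ennreal (v t) \<partial>?M) \<noteq> \<infinity>" and N: "(\<integral>\<^sup>+ t. ennreal (- v t) \<partial>?M) \<noteq> \<infinity>"
    using integrableD(2,3)[OF i] by auto
  obtain p where p: "p \<ge> 0" "(\<integral>\<^sup>+ t. ennreal (v t) \<partial>?M) = ennreal p"
    using P by (cases "(\<integral>\<^sup>+ t. ennreal (v t) \<partial>?M)" rule: ennreal_cases) auto
  obtain n where n: "n \<ge> 0" "(\<integral>\<^sup>+ t. ennreal (- v t) \<partial>?M) = ennreal n"
    using N by (cases "(\<integral>\<^sup>+ t. ennreal (- v t) \<partial>?M)" rule: ennreal_cases) auto
  show ?thesis
    unfolding ext_int_restr real_lebesgue_integral_def[OF i] p n using p n by simp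
qed

lemma ext_int_fin_integrable:
  assumes vm: "v \<in> borel_measurable (lebesgue_on {a..b})" and lb: "\<And>t. t \<in> {a..b} \<Longrightarrow> v t \<ge> c"
    and fin: "ext_int {a..b} v \<noteq> \<infinity>"
  shows "integrable (lebesgue_on {a..b}) v"
proof -
  let ?M = "lebesgue_on {a..b::real}"
  have Nf: "(\<integral>\<^sup>+ t. ennreal (- v t) \<partial>?M) < \<infinity>"
  proof -
    have "(\<integral>\<^sup>+ t. ennreal (- v t) \<partial>?M) \<le> (\<integral>\<^sup>+ t. ennreal (- c) \<partial>?M)"
      by (rule nn_integral_mono) (use lb in \<open>auto intro!: ennreal_leI\<close>)
    also have "\<dots> < \<infinity>"
      by (simp add: nn_integral_const emeasure_restrict_space ennreal_mult_less_top emeasure_lborel_Icc_eq)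
    finally show ?thesis .
  qed
  have Pf: "(\<integral>\<^sup>+ t. ennreal (v t) \<partial>?M) < \<infinity>"
  proof (rule ccontr)
    assume "\<not> ?thesis"
    then have "(\<integral>\<^sup>+ t. ennreal (v t) \<partial>?M) = \<infinity>" by (simp add: top.not_eq_extremum[symmetric])
    moreover obtain n where n: "n \<ge> 0" "(\<integral>\<^sup>+ t. ennreal (- v t) \<partial>?M) = ennreal n"
      using Nf by (cases "(\<integral>\<^sup>+ t. ennreal (- v t) \<partial>?M)" rule: ennreal_cases) simp_all
    ultimately have "ext_int {a..b} v = \<infinity>" unfolding ext_int_restr using n by simp
    then show False using fin by simp
  qed
  have "(\<integral>\<^sup>+ t. ennreal (norm (v t)) \<partial>?M) = (\<integral>\<^sup>+ t. ennreal (v t) + ennreal (- v t) \<partial>?M)"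
  proof (rule nn_integral_cong)
    fix t
    show "ennreal (norm (v t)) = ennreal (v t) + ennreal (- v t)"
    proof (cases "v t \<ge> 0")
      case True
      then have "ennreal (- v t) = 0" by (simp add: ennreal_eq_0_iff)
      then show ?thesis using True by simp
    next
      case False
      then have "ennreal (v t) = 0" by (simp add: ennreal_eq_0_iff)
      then show ?thesis using False by simp
    qed
  qed
  also have "\<dots> = (\<integral>\<^sup>+ t. ennreal (v t) \<partial>?M) + (\<integral>\<^sup>+ t. ennreal (- v t) \<partial>?M)"
    using vm by (simp add: nn_integral_add)
  also have "\<dots> < \<infinity>" using Pf Nf by (simp add: ennreal_add_less_top)
  finally show ?thesis by (rule integrableI_bounded[OF vm])
qed

lemma cmult_int2: "f integrable_on A \<Longrightarrow> (\<lambda>t. c * f t) integrable_on A" for f :: "real \<Rightarrow> real"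
  using integrable_on_cmult_left[of f A c] by simp

lemma E_bound: "bounded E \<Longrightarrow> \<exists>R\<ge>0. \<forall>x\<in>E. norm x \<le> R"
  unfolding bounded_pos by (auto intro: less_imp_le)

lemma storage:
  assumes "bounded E"
  shows "storage_function E (\<lambda>y. - blinfun_apply \<phi> y)"
proof -
  obtain R where R: "R \<ge> 0" "\<And>x. x \<in> E \<Longrightarrow> norm x \<le> R" using E_bound[OF assms] by blast
  have b: "\<bar>blinfun_apply \<phi> x\<bar> \<le> norm \<phi> * R" if "x \<in> E" for x
  proof -
    have "\<bar>blinfun_apply \<phi> x\<bar> \<le> norm \<phi> * norm x" using norm_blinfun[of \<phi> x] by simp
    also have "\<dots> \<le> norm \<phi> * R" using R(2)[OF that] by (intro mult_left_mono) auto
    finally show ?thesis .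
  qed
  show ?thesis unfolding storage_function_def
  proof (intro conjI ballI)
    show "bdd_below ((\<lambda>y. - blinfun_apply \<phi> y) ` E)"
      unfolding bdd_below_def using b by (intro exI[of _ "- (norm \<phi> * R)"]) (force simp: abs_le_iff)
    fix x assume "x \<in> E"
    show "\<exists>r>0. bounded ((\<lambda>y. - blinfun_apply \<phi> y) ` (E \<inter> ball x r))"
      unfolding bounded_iff using b by (intro exI[of _ 1]) (auto intro!: exI[of _ "norm \<phi> * R"])
  qed
qed

context sgrp begin

lemma diss_core:
  fixes f :: "'x \<Rightarrow> 'u::banach \<Rightarrow> 'x" and f0 :: "'x \<Rightarrow> 'u \<Rightarrow> real" and \<beta> :: "'x \<Rightarrow> 'u \<Rightarrow> real"
  assumes adj: "adj_gen_graph S \<phi> \<psi>"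
    and lag: "\<And>y u. y \<in> E \<Longrightarrow> u \<in> F \<Longrightarrow> lagrangian f f0 \<phi> \<psi> ys us + \<beta> y u \<le> lagrangian f f0 \<phi> \<psi> y u"
    and feas: "blinfun_apply \<psi> ys + blinfun_apply \<phi> (f ys us) = 0"
    and \<beta>c: "continuous_on UNIV (\<lambda>(a, b). \<beta> a b)" and \<beta>0: "\<And>a b. \<beta> a b \<ge> 0"
    and f_lip: "\<exists>L. \<forall>y1 u1 y2 u2. norm (f y1 u1 - f y2 u2) \<le> L * norm (y1 - y2, u1 - u2)"
    and f0_cont: "continuous_on UNIV (\<lambda>(y, u). f0 y u)"
    and f0_bdd: "bdd_below (range (\<lambda>(y, u). f0 y u))"
    and E_bounded: "bounded E"
    and adm: "admissible S f E F T y u" and tau: "\<tau> \<in> {0..T}"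
  shows "ereal (- blinfun_apply \<phi> (y 0)) + ext_int {0..\<tau>} (\<lambda>t. f0 (y t) (u t) - f0 ys us)
       \<ge> ereal (- blinfun_apply \<phi> (y \<tau>)) + ext_int {0..\<tau>} (\<lambda>t. \<beta> (y t) (u t))"
proof -
  have yc: "continuous_on {0..T} y" and L2: "L2_on {0..T} u"
    and mild: "\<And>\<tau>. \<tau> \<in> {0..T} \<Longrightarrow> ((\<lambda>t. blinfun_apply (S (\<tau> - t)) (f (y t) (u t))) has_integral (y \<tau> - blinfun_apply (S \<tau>) (y 0))) {0..\<tau>}"
    and mem: "\<And>t. t \<in> {0..T} \<Longrightarrow> y t \<in> E \<and> u t \<in> F"
    using adm unfolding admissible_def by auto
  have sm: "strongly_measurable_on {0..T} u" using L2 unfolding L2_on_def by simp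
  obtain R where R: "R \<ge> 0" "\<And>x. x \<in> E \<Longrightarrow> norm x \<le> R" using E_bound[OF E_bounded] by blast
  obtain L where L: "\<And>y1 u1 y2 u2. norm (f y1 u1 - f y2 u2) \<le> L * norm (y1 - y2, u1 - u2)" using f_lip by blast
  define L' where "L' = max L 0"
  define g where "g t = f (y t) (u t)" for t
  define B where "B t = norm (f 0 0) + L' * R + L' * norm (u t)" for t
  have Bint: "B integrable_on {0..T}"
    unfolding B_def by (intro integrable_add integrable_const_ivl cmult_int2 norm_u_int[OF L2])
  have gB: "norm (g t) \<le> B t" if t: "t \<in> {0..T}" for t
  proof -
    have "norm (g t) \<le> norm (f 0 0) + norm (f (y t) (u t) - f 0 0)"
      unfolding g_def using norm_triangle_ineq[of "f 0 0" "f (y t) (u t) - f 0 0"] by simp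
    also have "norm (f (y t) (u t) - f 0 0) \<le> L * norm (y t - 0, u t - 0)" by (rule L)
    also have "\<dots> \<le> L' * norm (y t, u t)" unfolding L'_def by (simp add: mult_right_mono)
    also have "\<dots> \<le> L' * (norm (y t) + norm (u t))"
      by (intro mult_left_mono norm_Pair_le) (simp add: L'_def)
    also have "\<dots> \<le> L' * (R + norm (u t))"
      using R(2) mem[OF t] by (intro mult_left_mono) (auto simp: L'_def)
    finally show ?thesis unfolding B_def by (simp add: algebra_simps)
  qed
  obtain b0 where b0: "\<And>a b. b0 \<le> f0 a b"
    using f0_bdd unfolding bdd_below_def by auto
  have t0: "0 \<le> \<tau>" "\<tau> \<le> T" using tau by auto
  define h where "h t = blinfun_apply \<psi> (y t) + blinfun_apply \<phi> (g t)" for t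
  have hint: "(h has_integral (blinfun_apply \<phi> (y \<tau>) - blinfun_apply \<phi> (y 0))) {0..\<tau>}"
  proof (cases "\<tau> = 0")
    case True
    then show ?thesis using has_integral_refl(2)[of h 0] by simp
  next
    case False
    then have tpos: "\<tau> > 0" using t0 by simp
    show ?thesis unfolding h_def
    proof (rule weak_identity[OF _ _ _ _ adj tpos])
      show "\<And>\<tau>'. \<tau>' \<in> {0..\<tau>} \<Longrightarrow> ((\<lambda>t. blinfun_apply (S (\<tau>' - t)) (g t)) has_integral (y \<tau>' - blinfun_apply (S \<tau>') (y 0))) {0..\<tau>'}"
        using mild t0 unfolding g_def by auto
      show "continuous_on {0..\<tau>} y" by (rule continuous_on_subset[OF yc]) (use t0 in auto)
      show "B integrable_on {0..\<tau>}" by (rule integrable_subinterval_real[OF Bint]) (use t0 in auto)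
      show "\<And>t. t \<in> {0..\<tau>} \<Longrightarrow> norm (g t) \<le> B t" using gB t0 by auto
    qed
  qed
  have habs: "h absolutely_integrable_on {0..\<tau>}"
  proof (rule absolutely_integrable_integrable_bound)
    show "h integrable_on {0..\<tau>}" using hint by blast
    show "(\<lambda>t. norm \<psi> * R + norm \<phi> * B t) integrable_on {0..\<tau>}"
      by (intro integrable_add integrable_const_ivl cmult_int2 integrable_subinterval_real[OF Bint]) (use t0 in auto)
    fix t assume t: "t \<in> {0..\<tau>}"
    then have tT: "t \<in> {0..T}" using t0 by auto
    have "norm (h t) \<le> norm \<psi> * norm (y t) + norm \<phi> * norm (g t)"
      unfolding h_def using norm_triangle_ineq[of "blinfun_apply \<psi> (y t)" "blinfun_apply \<phi> (g t)"]
        norm_blinfun[of \<psi> "y t"] norm_blinfun[of \<phi> "g t"] by linarith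
    also have "\<dots> \<le> norm \<psi> * R + norm \<phi> * B t"
      using R(2) mem[OF tT] gB[OF tT] by (intro add_mono mult_left_mono) auto
    finally show "norm (h t) \<le> norm \<psi> * R + norm \<phi> * B t" .
  qed
  have restr: "F' \<in> borel_measurable (lebesgue_on {0..T}) \<Longrightarrow> F' \<in> borel_measurable (lebesgue_on {0..\<tau>})" for F'
    by (rule measurable_restrict_mono) (use t0 in auto)
  have wm: "(\<lambda>t. f0 (y t) (u t) - f0 ys us) \<in> borel_measurable (lebesgue_on {0..\<tau>})"
  proof (rule restr)
    have "continuous_on UNIV (\<lambda>(a, b). f0 a b - f0 ys us)"
      using f0_cont by (simp add: case_prod_unfold continuous_intros)
    from meas_comp[OF sm yc this] show "(\<lambda>t. f0 (y t) (u t) - f0 ys us) \<in> borel_measurable (lebesgue_on {0..T})"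
      by simp
  qed
  have am: "(\<lambda>t. \<beta> (y t) (u t)) \<in> borel_measurable (lebesgue_on {0..\<tau>})"
    by (rule restr) (rule meas_comp[OF sm yc \<beta>c])
  have ineq: "f0 (y t) (u t) - f0 ys us + h t \<ge> \<beta> (y t) (u t)" if t: "t \<in> {0..\<tau>}" for t
  proof -
    have "y t \<in> E" "u t \<in> F" using mem[of t] t t0 by auto
    from lag[OF this] feas show ?thesis unfolding lagrangian_def h_def g_def by simp
  qed
  have hint': "(h has_integral ((- blinfun_apply \<phi> (y 0)) - (- blinfun_apply \<phi> (y \<tau>)))) {0..\<tau>}"
    using hint by simp
  show ?thesis
    by (rule ext_int_ineq[OF wm am habs hint' \<beta>0, of "b0 - f0 ys us"]) (use b0 ineq in auto)
qed

lemma const_adm: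
  assumes feas: "\<And>\<phi> \<psi>. adj_gen_graph S \<phi> \<psi> \<Longrightarrow> blinfun_apply \<psi> ys + blinfun_apply \<phi> (f ys us) = 0"
    and ys: "ys \<in> E" and us: "us \<in> F" and T: "T \<ge> 0"
  shows "admissible S f E F T (\<lambda>_. ys) (\<lambda>_. us)"
  unfolding admissible_def
proof (intro conjI ballI)
  show "continuous_on {0..T} (\<lambda>_. ys)" by simp
  have fm: "finite_measure (lebesgue_on {0..T})" by (simp add: finite_measure_lebesgue_on)
  show "L2_on {0..T} (\<lambda>_. us)"
    unfolding L2_on_def strongly_measurable_on_def
    using finite_measure.integrable_const[OF fm]
    by (auto intro!: exI[of _ "\<lambda>n t. us"])
  fix \<tau> assume "\<tau> \<in> {0..T}"
  then show "((\<lambda>t. blinfun_apply (S (\<tau> - t)) (f ys us)) has_integral (ys - blinfun_apply (S \<tau>) ys)) {0..\<tau>}"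
    using const_mild[OF feas] by auto
qed (use ys us in auto)

lemma turnpike:
  fixes f :: "'x \<Rightarrow> 'u::banach \<Rightarrow> 'x" and f0 :: "'x \<Rightarrow> 'u \<Rightarrow> real" and \<alpha> :: "real \<Rightarrow> real"
  assumes dissT: "\<And>T y u. T > 0 \<Longrightarrow> admissible S f E F T y u \<Longrightarrow>
      ereal (- blinfun_apply \<phi> (y 0)) + ext_int {0..T} (\<lambda>t. f0 (y t) (u t) - f0 ys us)
       \<ge> ereal (- blinfun_apply \<phi> (y T)) + ext_int {0..T} (\<lambda>t. \<alpha> (norm (y t - ys, u t - us)))"
    and K: "K_class \<alpha>"
    and cadm: "\<And>T. T > 0 \<Longrightarrow> admissible S f E F T (\<lambda>_. ys) (\<lambda>_. us)"
    and f0_cont: "continuous_on UNIV (\<lambda>(y, u). f0 y u)"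
    and f0_bdd: "bdd_below (range (\<lambda>(y, u). f0 y u))"
    and E_bounded: "bounded E"
  shows "measure_turnpike S f f0 E F ys us"
  unfolding measure_turnpike_def
proof (intro allI impI)
  fix \<epsilon> :: real assume \<epsilon>: "\<epsilon> > 0"
  have \<alpha>c: "continuous_on {0..} \<alpha>" and \<alpha>m: "strict_mono_on {0..} \<alpha>" and \<alpha>0: "\<alpha> 0 = 0"
    and \<alpha>nn: "\<And>r. r \<ge> 0 \<Longrightarrow> \<alpha> r \<ge> 0"
    using K unfolding K_class_def by auto
  have \<alpha>\<epsilon>: "\<alpha> \<epsilon> > 0" using strict_mono_onD[OF \<alpha>m, of 0 \<epsilon>] \<epsilon> \<alpha>0 by auto
  obtain R where R: "R \<ge> 0" "\<And>x. x \<in> E \<Longrightarrow> norm x \<le> R" using E_bound[OF E_bounded] by blast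
  define C0 where "C0 = 2 * norm \<phi> * R"
  have C0: "C0 \<ge> 0" unfolding C0_def using R by simp
  define \<Lambda> where "\<Lambda> = max 1 (C0 / \<alpha> \<epsilon>)"
  obtain b0 where b0: "\<And>a b. b0 \<le> f0 a b" using f0_bdd unfolding bdd_below_def by auto
  have \<beta>c: "continuous_on UNIV (\<lambda>(a, b). \<alpha> (norm (a - ys, b - us)))"
  proof -
    have c1: "continuous_on UNIV (\<lambda>p::'x \<times> 'u. norm (fst p - ys, snd p - us))" by (intro continuous_intros)
    have "continuous_on UNIV (\<lambda>p::'x \<times> 'u. \<alpha> (norm (fst p - ys, snd p - us)))"
      by (rule continuous_on_compose2[OF \<alpha>c c1]) auto
    then show ?thesis by (simp add: case_prod_unfold)
  qed
  show "\<exists>\<Lambda>>0. \<forall>T>0. \<forall>y u. optimal_dyn S f f0 E F T y u \<longrightarrow>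
      emeasure lebesgue {t \<in> {0..T}. \<epsilon> < norm (y t - ys, u t - us)} \<le> ennreal \<Lambda>"
  proof (intro exI[of _ \<Lambda>] conjI allI impI)
    show "\<Lambda> > 0" unfolding \<Lambda>_def by simp
    fix T :: real and y u assume T: "T > 0" and opt: "optimal_dyn S f f0 E F T y u"
    let ?I = "{0..T}"
    let ?M = "lebesgue_on ?I"
    have adm: "admissible S f E F T y u" and optc: "cost f0 T y u \<le> cost f0 T (\<lambda>_. ys) (\<lambda>_. us)"
      using opt cadm[OF T] unfolding optimal_dyn_def by auto
    have yc: "continuous_on ?I y" using adm unfolding admissible_def by blast
    have sm: "strongly_measurable_on ?I u" using adm unfolding admissible_def L2_on_def by blast
    have mem: "\<And>t. t \<in> ?I \<Longrightarrow> y t \<in> E \<and> u t \<in> F" using adm unfolding admissible_def by blast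
    define c where "c = f0 ys us"
    define v where "v t = f0 (y t) (u t)" for t
    have vm: "v \<in> borel_measurable ?M" unfolding v_def by (rule meas_comp[OF sm yc f0_cont])
    have "ext_int ?I v / ereal T \<le> ereal (c * T) / ereal T"
      using optc unfolding cost_def v_def c_def using ext_int_const[of T "f0 ys us"] T by simp
    also have "\<dots> = ereal c" using T by simp
    finally have "ext_int ?I v / ereal T \<le> ereal c" .
    then have vle: "ext_int ?I v \<le> ereal (c * T)" using T by (cases "ext_int ?I v") (auto simp: field_simps)
    then have "ext_int ?I v \<noteq> \<infinity>" by auto
    from ext_int_fin_integrable[OF vm _ this, of b0] have vi: "integrable ?M v" using b0 unfolding v_def by auto
    have fm: "finite_measure ?M" by (simp add: finite_measure_lebesgue_on)
    have ci: "integrable ?M (\<lambda>t. c)" using finite_measure.integrable_const[OF fm] .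
    have wi: "integrable ?M (\<lambda>t. v t - c)" using vi ci by (rule Bochner_Integration.integrable_diff)
    have intc: "integral\<^sup>L ?M (\<lambda>t. c) = c * T" using T by (simp add: measure_restrict_space)
    have "ereal (integral\<^sup>L ?M v) \<le> ereal (c * T)" using vle ext_int_of_integrable[OF vi] by simp
    then have ivle: "integral\<^sup>L ?M v \<le> c * T" by simp
    define wv where "wv = integral\<^sup>L ?M (\<lambda>t. v t - c)"
    have mT: "measure ?M ?I = T" using T by (simp add: measure_restrict_space)
    have wv: "wv \<le> 0" unfolding wv_def using ivle intc Bochner_Integration.integral_diff[OF vi ci] mT
      by (simp add: mult.commute)
    have extw: "ext_int ?I (\<lambda>t. f0 (y t) (u t) - f0 ys us) = ereal wv"
      unfolding wv_def using ext_int_of_integrable[OF wi] unfolding v_def c_def by simp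
    define a where "a t = \<alpha> (norm (y t - ys, u t - us))" for t
    have a0: "a t \<ge> 0" for t unfolding a_def by (rule \<alpha>nn) simp
    define A where "A = (\<integral>\<^sup>+ t. ennreal (a t) \<partial>?M)"
    have exta: "ext_int ?I a = enn2ereal A"
    proof -
      have "(\<integral>\<^sup>+ t. ennreal (- a t) \<partial>?M) = (\<integral>\<^sup>+ t. 0 \<partial>?M)"
        by (rule nn_integral_cong) (use a0 in \<open>simp add: ennreal_eq_0_iff\<close>)
      then show ?thesis unfolding ext_int_restr A_def by (simp add: zero_ennreal.rep_eq)
    qed
    have y0E: "y 0 \<in> E" and yTE: "y T \<in> E" using mem T by auto
    have phb: "blinfun_apply \<phi> (y T) - blinfun_apply \<phi> (y 0) \<le> C0"
    proof -
      have "\<bar>blinfun_apply \<phi> x\<bar> \<le> norm \<phi> * R" if "x \<in> E" for x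
      proof -
        have "\<bar>blinfun_apply \<phi> x\<bar> \<le> norm \<phi> * norm x" using norm_blinfun[of \<phi> x] by simp
        also have "\<dots> \<le> norm \<phi> * R" using R(2)[OF that] by (intro mult_left_mono) auto
        finally show ?thesis .
      qed
      from this[OF y0E] this[OF yTE] show ?thesis unfolding C0_def by linarith
    qed
    have dd: "ereal (- blinfun_apply \<phi> (y 0)) + ereal wv \<ge> ereal (- blinfun_apply \<phi> (y T)) + enn2ereal A"
      using dissT[OF T adm] extw exta unfolding a_def by simp
    have AC: "A \<le> ennreal C0"
    proof -
      have "enn2ereal A \<le> ereal C0"
      proof (cases "enn2ereal A")
        case (real r)
        then show ?thesis using dd wv phb by simp
      next
        case PInf
        then show ?thesis using dd by simp
      next
        case MInf
        then show ?thesis using enn2ereal_nonneg[of A] by simp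
      qed
      then show ?thesis using C0 by (simp add: less_eq_ennreal.rep_eq enn2ereal_ennreal)
    qed
    define D where "D = {t \<in> ?I. \<epsilon> < norm (y t - ys, u t - us)}"
    have nm: "(\<lambda>t. norm (y t - ys, u t - us)) \<in> borel_measurable ?M"
    proof -
      have "continuous_on UNIV (\<lambda>(a, b). norm (a - ys, b - us))" by (simp add: case_prod_unfold continuous_intros)
      from meas_comp[OF sm yc this] show ?thesis by simp
    qed
    have DM: "D \<in> sets ?M"
    proof -
      have "(\<lambda>t. norm (y t - ys, u t - us)) -` {\<epsilon><..} \<inter> space ?M \<in> sets ?M"
        by (rule measurable_sets[OF nm]) simp
      moreover have "(\<lambda>t. norm (y t - ys, u t - us)) -` {\<epsilon><..} \<inter> space ?M = D" unfolding D_def by auto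
      ultimately show ?thesis by simp
    qed
    have DI: "D \<subseteq> ?I" unfolding D_def by auto
    have emD: "emeasure lebesgue D = emeasure ?M D" using DI by (simp add: emeasure_restrict_space)
    have "ennreal (\<alpha> \<epsilon>) * emeasure ?M D = (\<integral>\<^sup>+ t. ennreal (\<alpha> \<epsilon>) * indicator D t \<partial>?M)"
      using nn_integral_cmult_indicator[OF DM, of "ennreal (\<alpha> \<epsilon>)"] by simp
    also have "\<dots> \<le> A" unfolding A_def
    proof (rule nn_integral_mono)
      fix t assume "t \<in> space ?M"
      show "ennreal (\<alpha> \<epsilon>) * indicator D t \<le> ennreal (a t)"
      proof (cases "t \<in> D")
        case True
        then have "\<epsilon> < norm (y t - ys, u t - us)" unfolding D_def by auto
        then have "\<alpha> \<epsilon> < a t" unfolding a_def using strict_mono_onD[OF \<alpha>m] \<epsilon> by auto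
        then show ?thesis using True by (auto intro!: ennreal_leI)
      qed simp
    qed
    also have "\<dots> \<le> ennreal C0" by (rule AC)
    finally have key: "ennreal (\<alpha> \<epsilon>) * emeasure ?M D \<le> ennreal C0" .
    have "emeasure ?M D \<noteq> \<infinity>"
    proof
      assume "emeasure ?M D = \<infinity>"
      then have "ennreal (\<alpha> \<epsilon>) * emeasure ?M D = \<infinity>" using \<alpha>\<epsilon> by (simp add: ennreal_mult_eq_top_iff)
      then show False using key by (simp add: top_unique)
    qed
    then obtain m where m: "m \<ge> 0" "emeasure ?M D = ennreal m"
      by (cases "emeasure ?M D" rule: ennreal_cases) auto
    have "ennreal (\<alpha> \<epsilon> * m) \<le> ennreal C0" using key m \<alpha>\<epsilon> by (simp add: ennreal_mult'')
    then have "\<alpha> \<epsilon> * m \<le> C0" using C0 ennreal_le_iff by blast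
    then have "m \<le> C0 / \<alpha> \<epsilon>" using \<alpha>\<epsilon> by (simp add: field_simps)
    then have "m \<le> \<Lambda>" unfolding \<Lambda>_def by simp
    then show "emeasure lebesgue {t \<in> {0..T}. \<epsilon> < norm (y t - ys, u t - us)} \<le> ennreal \<Lambda>"
      using emD m unfolding D_def[symmetric] by (simp add: ennreal_leI)
  qed
qed

end

lemma beta_cont:
  assumes K: "K_class \<alpha>"
  shows "continuous_on UNIV (\<lambda>(a::'x::real_normed_vector, b::'u::real_normed_vector). \<alpha> (norm (a - ys, b - us)))"
proof -
  have \<alpha>c: "continuous_on {0..} \<alpha>" using K unfolding K_class_def by auto
  have c1: "continuous_on UNIV (\<lambda>p::'x \<times> 'u. norm (fst p - ys, snd p - us))" by (intro continuous_intros)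
  have "continuous_on UNIV (\<lambda>p::'x \<times> 'u. \<alpha> (norm (fst p - ys, snd p - us)))"
    by (rule continuous_on_compose2[OF \<alpha>c c1]) auto
  then show ?thesis by (simp add: case_prod_unfold)
qed

theorem theorem4p1:
  fixes S :: "real \<Rightarrow> 'x::banach \<Rightarrow>\<^sub>L 'x"
    and f :: "'x \<Rightarrow> 'u::banach \<Rightarrow> 'x"
    and f0 :: "'x \<Rightarrow> 'u \<Rightarrow> real"
    and E :: "'x set" and F :: "'u set"
    and ys :: 'x and us :: 'u and \<phi>s :: "'x \<Rightarrow>\<^sub>L real"
  assumes reflX: "reflexive_space TYPE('x)"
    and reflU: "reflexive_space TYPE('u)"
    and sg: "C0_semigroup S"
    and f_cont: "continuous_on UNIV (\<lambda>(y, u). f y u)"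
    and f_lip: "\<exists>L. \<forall>y1 u1 y2 u2. norm (f y1 u1 - f y2 u2) \<le> L * norm (y1 - y2, u1 - u2)"
    and f0_cont: "continuous_on UNIV (\<lambda>(y, u). f0 y u)"
    and f0_bdd: "bdd_below (range (\<lambda>(y, u). f0 y u))"
    and dyn_opt_exists: "\<forall>T>0. \<exists>y u. optimal_dyn S f f0 E F T y u"
    and static_opt: "static_optimal S f f0 E F ys us"
    and E_bounded: "bounded E"
  shows "(strong_duality_with S f f0 E F ys us \<phi>s \<longrightarrow>
            dissipative S f E F (\<lambda>y u. f0 y u - f0 ys us) (\<lambda>y. - blinfun_apply \<phi>s y))
       \<and> (strict_strong_duality_with S f f0 E F ys us \<phi>s \<longrightarrow>
            strictly_dissipative S f E F ys us (\<lambda>y u. f0 y u - f0 ys us) (\<lambda>y. - blinfun_apply \<phi>s y)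
            \<and> measure_turnpike S f f0 E F ys us)"
proof -
  interpret sgrp S by unfold_locales (rule sg)
  have feas: "\<And>\<phi> \<psi>. adj_gen_graph S \<phi> \<psi> \<Longrightarrow> blinfun_apply \<psi> ys + blinfun_apply \<phi> (f ys us) = 0"
    and ysE: "ys \<in> E" and usF: "us \<in> F"
    using static_opt unfolding static_optimal_def static_feasible_def by auto
  have st: "storage_function E (\<lambda>y. - blinfun_apply \<phi>s y)" by (rule storage[OF E_bounded])
  show ?thesis
  proof (intro conjI impI)
    assume "strong_duality_with S f f0 E F ys us \<phi>s"
    then obtain \<psi>s where adj: "adj_gen_graph S \<phi>s \<psi>s"
      and mn: "\<And>y u. y \<in> E \<Longrightarrow> u \<in> F \<Longrightarrow> lagrangian f f0 \<phi>s \<psi>s ys us \<le> lagrangian f f0 \<phi>s \<psi>s y u"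
      unfolding strong_duality_with_def by blast
    show "dissipative S f E F (\<lambda>y u. f0 y u - f0 ys us) (\<lambda>y. - blinfun_apply \<phi>s y)"
      unfolding dissipative_def
    proof (intro conjI st allI impI ballI)
      fix T :: real and y u \<tau> assume T: "T > 0" and adm: "admissible S f E F T y u" and tau: "\<tau> \<in> {0..T}"
      have "ereal (- blinfun_apply \<phi>s (y 0)) + ext_int {0..\<tau>} (\<lambda>t. f0 (y t) (u t) - f0 ys us)
         \<ge> ereal (- blinfun_apply \<phi>s (y \<tau>)) + ext_int {0..\<tau>} (\<lambda>t. (\<lambda>a b. 0::real) (y t) (u t))"
        by (rule diss_core[OF adj _ feas[OF adj] _ _ f_lip f0_cont f0_bdd E_bounded adm tau])
          (use mn in auto)
      then show "ereal (- blinfun_apply \<phi>s (y \<tau>)) \<le> ereal (- blinfun_apply \<phi>s (y 0)) + ext_int {0..\<tau>} (\<lambda>t. f0 (y t) (u t) - f0 ys us)"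
        by (simp add: ext_int_zero)
    qed
  next
    assume "strict_strong_duality_with S f f0 E F ys us \<phi>s"
    then obtain \<psi>s \<alpha> where adj: "adj_gen_graph S \<phi>s \<psi>s" and K: "K_class \<alpha>"
      and mn: "\<And>y u. y \<in> E \<Longrightarrow> u \<in> F \<Longrightarrow> lagrangian f f0 \<phi>s \<psi>s ys us + \<alpha> (norm (y - ys, u - us)) \<le> lagrangian f f0 \<phi>s \<psi>s y u"
      unfolding strict_strong_duality_with_def by blast
    have \<alpha>nn: "\<And>r. r \<ge> 0 \<Longrightarrow> \<alpha> r \<ge> 0" using K unfolding K_class_def by auto
    have core: "ereal (- blinfun_apply \<phi>s (y 0)) + ext_int {0..\<tau>} (\<lambda>t. f0 (y t) (u t) - f0 ys us)
         \<ge> ereal (- blinfun_apply \<phi>s (y \<tau>)) + ext_int {0..\<tau>} (\<lambda>t. \<alpha> (norm (y t - ys, u t - us)))"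
      if adm: "admissible S f E F T y u" and tau: "\<tau> \<in> {0..T}" for T y u \<tau>
      using diss_core[where \<beta>="\<lambda>a b. \<alpha> (norm (a - ys, b - us))", OF adj _ feas[OF adj] beta_cont[OF K] _ f_lip f0_cont f0_bdd E_bounded adm tau]
        mn \<alpha>nn by auto
    show "strictly_dissipative S f E F ys us (\<lambda>y u. f0 y u - f0 ys us) (\<lambda>y. - blinfun_apply \<phi>s y)"
      unfolding strictly_dissipative_def
    proof (intro conjI st exI[of _ \<alpha>] K allI impI ballI)
      fix T :: real and y u \<tau> assume T: "T > 0" and adm: "admissible S f E F T y u" and tau: "\<tau> \<in> {0..T}"
      show "ereal (- blinfun_apply \<phi>s (y \<tau>)) + ext_int {0..\<tau>} (\<lambda>t. \<alpha> (norm (y t - ys, u t - us)))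
          \<le> ereal (- blinfun_apply \<phi>s (y 0)) + ext_int {0..\<tau>} (\<lambda>t. f0 (y t) (u t) - f0 ys us)"
        using core[OF adm tau] by simp
    qed
    show "measure_turnpike S f f0 E F ys us"
    proof (rule turnpike[OF _ K _ f0_cont f0_bdd E_bounded])
      show "\<And>T y u. T > 0 \<Longrightarrow> admissible S f E F T y u \<Longrightarrow>
          ereal (- blinfun_apply \<phi>s (y 0)) + ext_int {0..T} (\<lambda>t. f0 (y t) (u t) - f0 ys us)
          \<ge> ereal (- blinfun_apply \<phi>s (y T)) + ext_int {0..T} (\<lambda>t. \<alpha> (norm (y t - ys, u t - us)))"
        using core by auto
      show "\<And>T. T > 0 \<Longrightarrow> admissible S f E F T (\<lambda>_. ys) (\<lambda>_. us)"
        using const_adm[where f=f and ys=ys and us=us and E=E and F=F, OF feas ysE usF] by auto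
    qed
  qed
qed

end
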